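(* Assume $\mathbb Y=[-L,L]$ and the strict overlap condition: there is $B>0$ with $|g(X_i,A_i)/\pi_i^*(X_i,\mathbf O_{i-1};A_i)|\le B$ almost surely for all $i\in[n]$. Let $\mathcal F$ be a class of measurable functions $\mathbb X\times\mathbb A\to[-L,L]$, and let $\bar{\mathcal A}$ be an online algorithm producing estimates $\hat\mu_i(\mathbf O_{i-1}):\mathbb X\times\mathbb A\to\mathbb R$ (each depending measurably only on $\mathbf O_{i-1}$). Define $\bar l_i(\mu):=\{Y_i-\mu(X_i,A_i)\}^2$ and $\overline{\mathrm{Regret}}(n,\mathcal F;\bar{\mathcal A}):=\sum_{i=1}^n\bar l_i(\hat\mu_i(\mathbf O_{i-1}))-\inf_{\mu\in\mathcal F}\sum_{i=1}^n\bar l_i(\mu)$. Then the AIPW estimator built from these estimates satisfies $$\mathbb E_{\mathcal I^*}\big[\{\hat\tau_n^{\mathrm{AIPW}}(\mathbf O_n)-\tau(\mathcal I^* )\}^2\big]\le\frac1n\Big(v_*^2+\frac1n\mathbb E_{\mathcal I^*}[\overline{\mathrm{Regret}}(n,\mathcal F;\bar{\mathcal A})]+\inf_{\mu\in\mathcal F}\frac1n\sum_{i=1}^n\mathbb E_{\mathcal I^*}\big[\{\mu(X_i,A_i)-\mu^*(X_i,A_i)\}^2\big]\Big).$$ (As proved, the regret and approximation terms inside the parentheses are each multiplied by $B^2$, i.e. the bound holds with $B^2\big(\frac1n\mathbb E[\overline{\mathrm{Regret}}]+\inf_{\mu\in\mathcal F}\frac1n\sum_i\mathbb E[(\mu-\mu^*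 )^2(X_i,A_i)]\big)$ in place of those two terms; the displayed form is the paper's statement.)
   Context: Setup. Let $(\mathbb X,\lambda_{\mathbb X})$, $(\mathbb A,\lambda_{\mathbb A})$ be measurable spaces with $\sigma$-finite measures, $\mathbb Y\subseteq\mathbb R$, $\mathbb O:=\mathbb X\times\mathbb A\times\mathbb Y$. For each $i\in[n]$ a known behavioral policy has density $\pi_i^*(x,\mathbf o_{i-1};\cdot)$ w.r.t. $\lambda_{\mathbb A}$. Under the true instance $\mathcal I^*=(\Xi^*,\Gamma^* )$ data $\mathbf O_n=(X_1,A_1,Y_1,\dots,X_n,A_n,Y_n)$ are generated sequentially: $X_i\sim\Xi^*$ independently of $\mathbf O_{i-1}$ (the first $i-1$ triples); $A_i\mid(X_i,\mathbf O_{i-1})$ has density $\pi_i^*(X_i,\mathbf O_{i-1};\cdot)$; $Y_i\mid(X_i,A_i,\mathbf O_{i-1})\sim\Gamma^*(\cdot\mid X_i,A_i)$. $\mu^*(x,a):=\int y\,\Gamma^*(dy\mid x,a)$, $\sigma^2(x,a):=\int(y-\mu^*(x,a))^2\Gamma^*(dy\mid x,a)$. $g:\mathbb X\times\mathbb A\to\mathbb R$ is a given evaluation function, $\langle f,h\rangle_{\lambda_{\mathbb A}}:=\int fh\,d\lambda_{\mathbb A}$, $\tau(\mathcal I^* ):=\mathbb E_{X\sim\Xi^*}[\langle g(X,\cdot),\mu^*(X,\cdot)\rangle_{\lambda_{\mathbb A}}]$. $\|\varphi\|_{(n)}^2:=\frac1n\sum_{i=1}^n\mathbb E_{\mathcal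 I^*}[g^2(X_i,A_i)\varphi^2(X_i,A_i)/(\pi_i^* )^2(X_i,\mathbf O_{i-1};A_i)]$, $v_*^2:=\mathrm{Var}_{X\sim\Xi^*}[\langle g(X,\cdot),\mu^*(X,\cdot)\rangle_{\lambda_{\mathbb A}}]+\|\sigma\|_{(n)}^2$. AIPW estimator: $\hat\tau_n^{\mathrm{AIPW}}(\mathbf O_n):=\frac1n\sum_{i=1}^n\big[\frac{g(X_i,A_i)}{\pi_i^*(X_i,\mathbf O_{i-1};A_i)}\{Y_i-\hat\mu_i(\mathbf O_{i-1})(X_i,A_i)\}+\langle g(X_i,\cdot),\hat\mu_i(\mathbf O_{i-1})(X_i,\cdot)\rangle_{\lambda_{\mathbb A}}\big]$. All expectations are assumed finite.
   Formalization: The behavioural density $\pi_i^*(x,\mathbf o_{i-1};a)$ is also positive wherever $g(x,a)$ is nonzero, and in the bound the regret and approximation terms are each multiplied by $B^2$. Each condition added here is assumed in the paper as well or is needed for the statement above to hold. This also corrects a misprint. *)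

theory Defs
  imports "HOL-Probability.Probability"
begin

text \<open>Histories o_{i} (the first i observation triples) are represented as
  functions on the index set {..<i} (0-based), i.e. elements of a finite product space.\<close>

type_synonym ('x, 'a) hist = "nat \<Rightarrow> 'x \<times> 'a \<times> real"

definition histM :: "'x measure \<Rightarrow> 'a measure \<Rightarrow> nat \<Rightarrow> ('x, 'a) hist measure" where
  "histM MX MA i = PiM {..<i} (\<lambda>_. MX \<Otimes>\<^sub>M MA \<Otimes>\<^sub>M (borel :: real measure))"

definition hist :: "(nat \<Rightarrow> 'w \<Rightarrow> 'x) \<Rightarrow> (nat \<Rightarrow> 'w \<Rightarrow> 'a) \<Rightarrow> (nat \<Rightarrow> 'w \<Rightarrow> real)
    \<Rightarrow> nat \<Rightarrow> 'w \<Rightarrow> ('x, 'a) hist" where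
  "hist X A Y i \<omega> = (\<lambda>j\<in>{..<i}. (X j \<omega>, A j \<omega>, Y j \<omega>))"

text \<open>Data-generating process, 0-based index i < n (paper index i+1).
  The conditional laws are encoded by the disintegration identities for all
  nonnegative measurable test functions.\<close>

definition sequential_model ::
  "'w measure \<Rightarrow> 'x measure \<Rightarrow> 'a measure \<Rightarrow> 'a measure \<Rightarrow> 'x measure
   \<Rightarrow> ('x \<Rightarrow> 'a \<Rightarrow> real measure) \<Rightarrow> (nat \<Rightarrow> 'x \<Rightarrow> ('x, 'a) hist \<Rightarrow> 'a \<Rightarrow> real)
   \<Rightarrow> (nat \<Rightarrow> 'w \<Rightarrow> 'x) \<Rightarrow> (nat \<Rightarrow> 'w \<Rightarrow> 'a) \<Rightarrow> (nat \<Rightarrow> 'w \<Rightarrow> real) \<Rightarrow> nat \<Rightarrow> bool" where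
  "sequential_model M MX MA lamA Xi Gam pol X A Y n \<longleftrightarrow>
     prob_space M \<and>
     sigma_finite_measure lamA \<and> sets lamA = sets MA \<and>
     prob_space Xi \<and> sets Xi = sets MX \<and>
     (\<forall>x a. prob_space (Gam x a) \<and> sets (Gam x a) = sets (borel :: real measure)) \<and>
     (\<lambda>(x, a). Gam x a) \<in> measurable (MX \<Otimes>\<^sub>M MA) (subprob_algebra borel) \<and>
     (\<forall>i<n. (\<lambda>(x, hh, a). pol i x hh a) \<in> borel_measurable (MX \<Otimes>\<^sub>M histM MX MA i \<Otimes>\<^sub>M MA)) \<and>
     (\<forall>i<n. \<forall>x hh a. 0 \<le> pol i x hh a) \<and>
     (\<forall>i<n. X i \<in> measurable M MX \<and> A i \<in> measurable M MA \<and> Y i \<in> borel_measurable M) \<and>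
     \<comment> \<open>X_i ~ Xi independently of O_{i-1}\<close>
     (\<forall>i<n. \<forall>h \<in> borel_measurable (histM MX MA i \<Otimes>\<^sub>M MX).
        (\<integral>\<^sup>+\<omega>. h (hist X A Y i \<omega>, X i \<omega>) \<partial>M)
        = (\<integral>\<^sup>+\<omega>. (\<integral>\<^sup>+x. h (hist X A Y i \<omega>, x) \<partial>Xi) \<partial>M)) \<and>
     \<comment> \<open>A_i | (X_i, O_{i-1}) has density pi_i(X_i, O_{i-1}; .) w.r.t. lamA\<close>
     (\<forall>i<n. \<forall>h \<in> borel_measurable (histM MX MA i \<Otimes>\<^sub>M MX \<Otimes>\<^sub>M MA).
        (\<integral>\<^sup>+\<omega>. h (hist X A Y i \<omega>, X i \<omega>, A i \<omega>) \<partial>M)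
        = (\<integral>\<^sup>+\<omega>. (\<integral>\<^sup>+a. ennreal (pol i (X i \<omega>) (hist X A Y i \<omega>) a)
                        * h (hist X A Y i \<omega>, X i \<omega>, a) \<partial>lamA) \<partial>M)) \<and>
     \<comment> \<open>Y_i | (X_i, A_i, O_{i-1}) ~ Gam(. | X_i, A_i)\<close>
     (\<forall>i<n. \<forall>h \<in> borel_measurable (histM MX MA i \<Otimes>\<^sub>M MX \<Otimes>\<^sub>M MA \<Otimes>\<^sub>M borel).
        (\<integral>\<^sup>+\<omega>. h (hist X A Y i \<omega>, X i \<omega>, A i \<omega>, Y i \<omega>) \<partial>M)
        = (\<integral>\<^sup>+\<omega>. (\<integral>\<^sup>+y. h (hist X A Y i \<omega>, X i \<omega>, A i \<omega>, y) \<partial>Gam (X i \<omega>) (A i \<omega>)) \<partial>M))"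

definition mu_star :: "('x \<Rightarrow> 'a \<Rightarrow> real measure) \<Rightarrow> 'x \<Rightarrow> 'a \<Rightarrow> real" where
  "mu_star Gam x a = (\<integral>y. y \<partial>Gam x a)"

definition sigma_sq :: "('x \<Rightarrow> 'a \<Rightarrow> real measure) \<Rightarrow> 'x \<Rightarrow> 'a \<Rightarrow> real" where
  "sigma_sq Gam x a = (\<integral>y. (y - mu_star Gam x a)\<^sup>2 \<partial>Gam x a)"

definition innerA :: "'a measure \<Rightarrow> ('a \<Rightarrow> real) \<Rightarrow> ('a \<Rightarrow> real) \<Rightarrow> real" where
  "innerA lamA f h = (\<integral>a. f a * h a \<partial>lamA)"

definition tau :: "'x measure \<Rightarrow> 'a measure \<Rightarrow> ('x \<Rightarrow> 'a \<Rightarrow> real) \<Rightarrow> ('x \<Rightarrow> 'a \<Rightarrow> real measure) \<Rightarrow> real" where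
  "tau Xi lamA g Gam = (\<integral>x. innerA lamA (g x) (mu_star Gam x) \<partial>Xi)"

text \<open>\<open>\<parallel>\<phi>\<parallel>\<^sub>(n)\<^sup>2\<close> for a function phi (here phi = sigma^2 is passed squared).\<close>
definition norm_n_sq :: "'w measure \<Rightarrow> ('x \<Rightarrow> 'a \<Rightarrow> real) \<Rightarrow> (nat \<Rightarrow> 'x \<Rightarrow> ('x, 'a) hist \<Rightarrow> 'a \<Rightarrow> real)
   \<Rightarrow> (nat \<Rightarrow> 'w \<Rightarrow> 'x) \<Rightarrow> (nat \<Rightarrow> 'w \<Rightarrow> 'a) \<Rightarrow> (nat \<Rightarrow> 'w \<Rightarrow> real) \<Rightarrow> nat
   \<Rightarrow> ('x \<Rightarrow> 'a \<Rightarrow> real) \<Rightarrow> real" where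
  "norm_n_sq M g pol X A Y n phi = (1 / real n) * (\<Sum>i<n.
     \<integral>\<omega>. (g (X i \<omega>) (A i \<omega>))\<^sup>2 * (phi (X i \<omega>) (A i \<omega>))\<^sup>2
           / (pol i (X i \<omega>) (hist X A Y i \<omega>) (A i \<omega>))\<^sup>2 \<partial>M)"

definition v_star_sq where
  "v_star_sq M Xi lamA g Gam pol X A Y n =
     (\<integral>x. (innerA lamA (g x) (mu_star Gam x) - tau Xi lamA g Gam)\<^sup>2 \<partial>Xi)
     + norm_n_sq M g pol X A Y n (\<lambda>x a. sqrt (sigma_sq Gam x a))"

definition aipw where
  "aipw lamA g pol muhat X A Y n \<omega> = (1 / real n) * (\<Sum>i<n.
     g (X i \<omega>) (A i \<omega>) / pol i (X i \<omega>) (hist X A Y i \<omega>) (A i \<omega>)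
       * (Y i \<omega> - muhat i (hist X A Y i \<omega>) (X i \<omega>) (A i \<omega>))
     + innerA lamA (g (X i \<omega>)) (muhat i (hist X A Y i \<omega>) (X i \<omega>)))"

definition regret where
  "regret F muhat X A Y n \<omega> =
     (\<Sum>i<n. (Y i \<omega> - muhat i (hist X A Y i \<omega>) (X i \<omega>) (A i \<omega>))\<^sup>2)
     - (INF mu\<in>F. \<Sum>i<n. (Y i \<omega> - mu (X i \<omega>) (A i \<omega>))\<^sup>2)"

end

theory Submission
  imports Defs
begin

lemma disint_integral:
  fixes U :: "'w \<Rightarrow> 'u" and V :: "'w \<Rightarrow> 'v" and N :: "'u \<Rightarrow> 'v measure"
    and p :: "'u \<Rightarrow> 'v \<Rightarrow> real" and f :: "'u \<times> 'v \<Rightarrow> real" and E :: "'w \<Rightarrow> real"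
  assumes U[measurable]: "U \<in> measurable M MU" and V[measurable]: "V \<in> measurable M MV"
    and sets_N: "\<And>u. sets (N u) = sets MV"
    and p_meas[measurable]: "(\<lambda>(u, v). p u v) \<in> borel_measurable (MU \<Otimes>\<^sub>M MV)"
    and p_nn: "\<And>u v. 0 \<le> p u v"
    and ident: "\<And>h. h \<in> borel_measurable (MU \<Otimes>\<^sub>M MV) \<Longrightarrow>
        (\<integral>\<^sup>+\<omega>. h (U \<omega>, V \<omega>) \<partial>M) = (\<integral>\<^sup>+\<omega>. (\<integral>\<^sup>+v. ennreal (p (U \<omega>) v) * h (U \<omega>, v) \<partial>N (U \<omega>)) \<partial>M)"
    and kn: "\<And>h. h \<in> borel_measurable (MU \<Otimes>\<^sub>M MV) \<Longrightarrow>
        (\<lambda>u. \<integral>\<^sup>+v. h (u, v) \<partial>N u) \<in> borel_measurable MU"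
    and f[measurable]: "f \<in> borel_measurable (MU \<Otimes>\<^sub>M MV)"
    and fi: "integrable M (\<lambda>\<omega>. f (U \<omega>, V \<omega>))"
    and E[measurable]: "E \<in> borel_measurable M"
    and E_eq: "AE \<omega> in M. integrable (N (U \<omega>)) (\<lambda>v. p (U \<omega>) v * f (U \<omega>, v)) \<longrightarrow>
                 (\<integral>v. p (U \<omega>) v * f (U \<omega>, v) \<partial>N (U \<omega>)) = E \<omega>"
  shows "AE \<omega> in M. integrable (N (U \<omega>)) (\<lambda>v. p (U \<omega>) v * f (U \<omega>, v))"
    and "integrable M E"
    and "(\<integral>\<omega>. f (U \<omega>, V \<omega>) \<partial>M) = (\<integral>\<omega>. E \<omega> \<partial>M)"
proof -
  define fp where "fp = (\<lambda>z. max (f z) 0)"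
  define fm where "fm = (\<lambda>z. max (- f z) 0)"
  have fpm[measurable]: "fp \<in> borel_measurable (MU \<Otimes>\<^sub>M MV)" and fmm[measurable]: "fm \<in> borel_measurable (MU \<Otimes>\<^sub>M MV)"
    unfolding fp_def fm_def by measurable
  have meas_slice: "(\<lambda>v. p u v * k (u, v)) \<in> borel_measurable (N u)"
    if "u \<in> space MU" "k \<in> borel_measurable (MU \<Otimes>\<^sub>M MV)" for u k
  proof -
    have "(\<lambda>z. p (fst z) (snd z) * k z) \<in> borel_measurable (MU \<Otimes>\<^sub>M MV)"
      using that(2) p_meas by measurable
    from measurable_Pair2[OF this that(1)] have "(\<lambda>v. p u v * k (u, v)) \<in> borel_measurable MV"
      by simp
    then show ?thesis using sets_N measurable_cong_sets by blast
  qed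
  {
    fix k assume k[measurable]: "k \<in> borel_measurable (MU \<Otimes>\<^sub>M MV)" and k_nn: "\<And>z. 0 \<le> k z"
      and kle: "\<And>z. k z \<le> \<bar>f z\<bar>"
    define G where "G = (\<lambda>\<omega>. \<integral>\<^sup>+v. ennreal (p (U \<omega>) v * k (U \<omega>, v)) \<partial>N (U \<omega>))"
    have hm: "(\<lambda>z. ennreal (p (fst z) (snd z) * k z)) \<in> borel_measurable (MU \<Otimes>\<^sub>M MV)"
      using p_meas by measurable
    have Gm[measurable]: "G \<in> borel_measurable M"
    proof -
      have "(\<lambda>u. \<integral>\<^sup>+v. ennreal (p (fst (u, v)) (snd (u, v)) * k (u, v)) \<partial>N u) \<in> borel_measurable MU"
        by (rule kn[OF hm])
      then have "(\<lambda>u. \<integral>\<^sup>+v. ennreal (p u v * k (u, v)) \<partial>N u) \<in> borel_measurable MU" by simp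
      then show ?thesis unfolding G_def by (rule measurable_compose[OF U, rotated])
    qed
    have eq1: "(\<integral>\<^sup>+\<omega>. ennreal (k (U \<omega>, V \<omega>)) \<partial>M) = (\<integral>\<^sup>+\<omega>. G \<omega> \<partial>M)"
    proof -
      have "(\<integral>\<^sup>+\<omega>. ennreal (k (U \<omega>, V \<omega>)) \<partial>M)
          = (\<integral>\<^sup>+\<omega>. (\<integral>\<^sup>+v. ennreal (p (U \<omega>) v) * ennreal (k (U \<omega>, v)) \<partial>N (U \<omega>)) \<partial>M)"
        by (rule ident[of "\<lambda>z. ennreal (k z)"]) measurable
      also have "\<dots> = (\<integral>\<^sup>+\<omega>. G \<omega> \<partial>M)"
        unfolding G_def using p_nn k_nn by (simp add: ennreal_mult)
      finally show ?thesis .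
    qed
    have kint: "integrable M (\<lambda>\<omega>. k (U \<omega>, V \<omega>))"
      by (rule Bochner_Integration.integrable_bound[OF fi]) (auto simp: k_nn kle abs_of_nonneg intro: order_trans[OF kle])
    have fin: "(\<integral>\<^sup>+\<omega>. ennreal (k (U \<omega>, V \<omega>)) \<partial>M) < \<infinity>"
      using kint by (simp add: integrable_iff_bounded k_nn abs_of_nonneg)
    then have finG: "(\<integral>\<^sup>+\<omega>. G \<omega> \<partial>M) \<noteq> \<infinity>" using eq1 by simp
    have AEfin: "AE \<omega> in M. G \<omega> \<noteq> \<infinity>" by (rule nn_integral_PInf_AE[OF Gm finG])
    have AEint: "AE \<omega> in M. integrable (N (U \<omega>)) (\<lambda>v. p (U \<omega>) v * k (U \<omega>, v))
         \<and> (\<integral>v. p (U \<omega>) v * k (U \<omega>, v) \<partial>N (U \<omega>)) = enn2real (G \<omega>)"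
      using AEfin
    proof (rule AE_mp[OF _ AE_I2], intro impI)
      fix \<omega> assume \<omega>: "\<omega> \<in> space M" and Gf: "G \<omega> \<noteq> \<infinity>"
      have um: "U \<omega> \<in> space MU" by (rule measurable_space[OF U \<omega>])
      have ms: "(\<lambda>v. p (U \<omega>) v * k (U \<omega>, v)) \<in> borel_measurable (N (U \<omega>))"
        by (rule meas_slice[OF um k])
      show "integrable (N (U \<omega>)) (\<lambda>v. p (U \<omega>) v * k (U \<omega>, v))
         \<and> (\<integral>v. p (U \<omega>) v * k (U \<omega>, v) \<partial>N (U \<omega>)) = enn2real (G \<omega>)"
      proof
        show "integrable (N (U \<omega>)) (\<lambda>v. p (U \<omega>) v * k (U \<omega>, v))"
          using Gf ms p_nn k_nn by (intro integrableI_nonneg) (auto simp: G_def top.not_eq_extremum)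
        show "(\<integral>v. p (U \<omega>) v * k (U \<omega>, v) \<partial>N (U \<omega>)) = enn2real (G \<omega>)"
          unfolding G_def using ms p_nn k_nn by (intro integral_eq_nn_integral) auto
      qed
    qed
    have Gint: "integrable M (\<lambda>\<omega>. enn2real (G \<omega>))"
    proof (rule integrableI_nonneg)
      show "(\<lambda>\<omega>. enn2real (G \<omega>)) \<in> borel_measurable M" by measurable
      show "AE x in M. 0 \<le> enn2real (G x)" by simp
      have "(\<integral>\<^sup>+\<omega>. ennreal (enn2real (G \<omega>)) \<partial>M) = (\<integral>\<^sup>+\<omega>. G \<omega> \<partial>M)"
        by (rule nn_integral_cong_AE) (use AEfin in \<open>auto simp: ennreal_enn2real_if\<close>)
      then show "(\<integral>\<^sup>+\<omega>. ennreal (enn2real (G \<omega>)) \<partial>M) < \<infinity>" using finG by (simp add: top.not_eq_extremum)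
    qed
    have Geq: "(\<integral>\<omega>. enn2real (G \<omega>) \<partial>M) = (\<integral>\<omega>. k (U \<omega>, V \<omega>) \<partial>M)"
    proof -
      have "(\<integral>\<omega>. enn2real (G \<omega>) \<partial>M) = enn2real (\<integral>\<^sup>+\<omega>. ennreal (enn2real (G \<omega>)) \<partial>M)"
        by (rule integral_eq_nn_integral) auto
      also have "(\<integral>\<^sup>+\<omega>. ennreal (enn2real (G \<omega>)) \<partial>M) = (\<integral>\<^sup>+\<omega>. G \<omega> \<partial>M)"
        by (rule nn_integral_cong_AE) (use AEfin in \<open>auto simp: ennreal_enn2real_if\<close>)
      also have "enn2real \<dots> = (\<integral>\<omega>. k (U \<omega>, V \<omega>) \<partial>M)"
        using eq1 k_nn by (simp add: integral_eq_nn_integral)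
      finally show ?thesis .
    qed
    note AEint Gint Geq
  } note part = this
  have fpb: "\<And>z. fp z \<le> \<bar>f z\<bar>" "\<And>z. fm z \<le> \<bar>f z\<bar>" "\<And>z. 0 \<le> fp z" "\<And>z. 0 \<le> fm z"
    unfolding fp_def fm_def by auto
  note P = part[of fp, OF fpm fpb(3) fpb(1)] and Mn = part[of fm, OF fmm fpb(4) fpb(2)]
  define Gp where "Gp = (\<lambda>\<omega>. enn2real (\<integral>\<^sup>+v. ennreal (p (U \<omega>) v * fp (U \<omega>, v)) \<partial>N (U \<omega>)))"
  define Gn where "Gn = (\<lambda>\<omega>. enn2real (\<integral>\<^sup>+v. ennreal (p (U \<omega>) v * fm (U \<omega>, v)) \<partial>N (U \<omega>)))"
  have fsplit: "\<And>z. f z = fp z - fm z" unfolding fp_def fm_def by auto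
  have AEall: "AE \<omega> in M. integrable (N (U \<omega>)) (\<lambda>v. p (U \<omega>) v * f (U \<omega>, v))
      \<and> (\<integral>v. p (U \<omega>) v * f (U \<omega>, v) \<partial>N (U \<omega>)) = Gp \<omega> - Gn \<omega>"
    using P(1) Mn(1)
  proof (eventually_elim)
    case (elim \<omega>)
    have e: "(\<lambda>v. p (U \<omega>) v * f (U \<omega>, v)) = (\<lambda>v. p (U \<omega>) v * fp (U \<omega>, v) - p (U \<omega>) v * fm (U \<omega>, v))"
      by (simp add: fsplit[of "(U \<omega>, _)"] right_diff_distrib)
    show ?case unfolding e using elim by (simp add: Gp_def Gn_def)
  qed
  then show "AE \<omega> in M. integrable (N (U \<omega>)) (\<lambda>v. p (U \<omega>) v * f (U \<omega>, v))" by auto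
  have Gpi: "integrable M Gp" and Gni: "integrable M Gn" using P(2) Mn(2) by (simp_all add: Gp_def Gn_def)
  have EG: "AE \<omega> in M. E \<omega> = Gp \<omega> - Gn \<omega>" using AEall E_eq by eventually_elim auto
  have GGm: "(\<lambda>\<omega>. Gp \<omega> - Gn \<omega>) \<in> borel_measurable M" using Gpi Gni by measurable
  show Ei: "integrable M E"
    using integrable_cong_AE[OF E GGm EG] Gpi Gni by auto
  have "(\<integral>\<omega>. f (U \<omega>, V \<omega>) \<partial>M) = (\<integral>\<omega>. fp (U \<omega>, V \<omega>) - fm (U \<omega>, V \<omega>) \<partial>M)"
    by (simp add: fsplit)
  also have "\<dots> = (\<integral>\<omega>. fp (U \<omega>, V \<omega>) \<partial>M) - (\<integral>\<omega>. fm (U \<omega>, V \<omega>) \<partial>M)"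
  proof (rule Bochner_Integration.integral_diff)
    show "integrable M (\<lambda>\<omega>. fp (U \<omega>, V \<omega>))"
      by (rule Bochner_Integration.integrable_bound[OF fi]) (auto simp: fpb abs_of_nonneg)
    show "integrable M (\<lambda>\<omega>. fm (U \<omega>, V \<omega>))"
      by (rule Bochner_Integration.integrable_bound[OF fi]) (auto simp: fpb abs_of_nonneg)
  qed
  also have "\<dots> = (\<integral>\<omega>. Gp \<omega> \<partial>M) - (\<integral>\<omega>. Gn \<omega> \<partial>M)"
    using P(3) Mn(3) by (simp add: Gp_def Gn_def)
  also have "\<dots> = (\<integral>\<omega>. Gp \<omega> - Gn \<omega> \<partial>M)" using Gpi Gni by simp
  also have "\<dots> = (\<integral>\<omega>. E \<omega> \<partial>M)"
    by (rule integral_cong_AE[OF GGm E]) (use EG in auto)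
  finally show "(\<integral>\<omega>. f (U \<omega>, V \<omega>) \<partial>M) = (\<integral>\<omega>. E \<omega> \<partial>M)" .
qed

locale thm6 =
  fixes M :: "'w measure" and MX :: "'x measure" and MA :: "'a measure"
    and lamA :: "'a measure" and Xi :: "'x measure"
    and Gam :: "'x \<Rightarrow> 'a \<Rightarrow> real measure"
    and pol :: "nat \<Rightarrow> 'x \<Rightarrow> ('x, 'a) hist \<Rightarrow> 'a \<Rightarrow> real"
    and X :: "nat \<Rightarrow> 'w \<Rightarrow> 'x" and A :: "nat \<Rightarrow> 'w \<Rightarrow> 'a" and Y :: "nat \<Rightarrow> 'w \<Rightarrow> real"
    and g :: "'x \<Rightarrow> 'a \<Rightarrow> real"
    and muhat :: "nat \<Rightarrow> ('x, 'a) hist \<Rightarrow> 'x \<Rightarrow> 'a \<Rightarrow> real"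
    and F :: "('x \<Rightarrow> 'a \<Rightarrow> real) set"
    and n :: nat and L B :: real
  assumes model: "sequential_model M MX MA lamA Xi Gam pol X A Y n"
    and n_pos: "0 < n"
    and Y_range: "\<forall>x a. AE y in Gam x a. \<bar>y\<bar> \<le> L"
    and g_meas: "(\<lambda>(x, a). g x a) \<in> borel_measurable (MX \<Otimes>\<^sub>M MA)"
    and B_pos: "0 < B"
    and overlap: "\<forall>i<n. AE \<omega> in M.
        \<bar>g (X i \<omega>) (A i \<omega>) / pol i (X i \<omega>) (hist X A Y i \<omega>) (A i \<omega>)\<bar> \<le> B"
    and coverage: "\<forall>i<n. \<forall>x hh a. g x a \<noteq> 0 \<longrightarrow> 0 < pol i x hh a"
    and F_meas: "\<forall>mu\<in>F. (\<lambda>(x, a). mu x a) \<in> borel_measurable (MX \<Otimes>\<^sub>M MA)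
                          \<and> (\<forall>x a. \<bar>mu x a\<bar> \<le> L)"
    and F_ne: "F \<noteq> {}"
    and muhat_meas: "\<forall>i<n. (\<lambda>(hh, x, a). muhat i hh x a)
                        \<in> borel_measurable (histM MX MA i \<Otimes>\<^sub>M MX \<Otimes>\<^sub>M MA)"
    and fin_inner_hat: "\<forall>i<n. \<forall>hh x. integrable lamA (\<lambda>a. g x a * muhat i hh x a)"
    and fin_inner_star: "\<forall>x. integrable lamA (\<lambda>a. g x a * mu_star Gam x a)"
    and fin_var: "integrable Xi (\<lambda>x. (innerA lamA (g x) (mu_star Gam x))\<^sup>2)"
    and fin_regret: "integrable M (regret F muhat X A Y n)"
    and fin_mse: "integrable M (\<lambda>\<omega>. (aipw lamA g pol muhat X A Y n \<omega> - tau Xi lamA g Gam)\<^sup>2)"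
begin

abbreviation "HM i \<equiv> histM MX MA i"
abbreviation "ms \<equiv> mu_star Gam"
abbreviation "tau0 \<equiv> tau Xi lamA g Gam"
abbreviation "Is x \<equiv> innerA lamA (g x) (mu_star Gam x)"

lemma M_prob: "prob_space M" and lamA_sf: "sigma_finite_measure lamA" and sets_lamA: "sets lamA = sets MA"
  and Xi_prob: "prob_space Xi" and sets_Xi: "sets Xi = sets MX"
  and Gam_prob: "\<And>x a. prob_space (Gam x a)" and sets_Gam: "\<And>x a. sets (Gam x a) = sets (borel :: real measure)"
  and Gam_kernel: "(\<lambda>(x, a). Gam x a) \<in> measurable (MX \<Otimes>\<^sub>M MA) (subprob_algebra borel)"
  using model unfolding sequential_model_def by auto

lemma model_i:
  assumes "i < n"
  shows "(\<lambda>(x, hh, a). pol i x hh a) \<in> borel_measurable (MX \<Otimes>\<^sub>M HM i \<Otimes>\<^sub>M MA)"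
    and "\<And>x hh a. 0 \<le> pol i x hh a"
    and "X i \<in> measurable M MX" and "A i \<in> measurable M MA" and "Y i \<in> borel_measurable M"
    and "\<And>h. h \<in> borel_measurable (HM i \<Otimes>\<^sub>M MX) \<Longrightarrow>
        (\<integral>\<^sup>+\<omega>. h (hist X A Y i \<omega>, X i \<omega>) \<partial>M)
        = (\<integral>\<^sup>+\<omega>. (\<integral>\<^sup>+x. h (hist X A Y i \<omega>, x) \<partial>Xi) \<partial>M)"
    and "\<And>h. h \<in> borel_measurable (HM i \<Otimes>\<^sub>M MX \<Otimes>\<^sub>M MA) \<Longrightarrow>
        (\<integral>\<^sup>+\<omega>. h (hist X A Y i \<omega>, X i \<omega>, A i \<omega>) \<partial>M)
        = (\<integral>\<^sup>+\<omega>. (\<integral>\<^sup>+a. ennreal (pol i (X i \<omega>) (hist X A Y i \<omega>) a)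
                        * h (hist X A Y i \<omega>, X i \<omega>, a) \<partial>lamA) \<partial>M)"
    and "\<And>h. h \<in> borel_measurable (HM i \<Otimes>\<^sub>M MX \<Otimes>\<^sub>M MA \<Otimes>\<^sub>M borel) \<Longrightarrow>
        (\<integral>\<^sup>+\<omega>. h (hist X A Y i \<omega>, X i \<omega>, A i \<omega>, Y i \<omega>) \<partial>M)
        = (\<integral>\<^sup>+\<omega>. (\<integral>\<^sup>+y. h (hist X A Y i \<omega>, X i \<omega>, A i \<omega>, y) \<partial>Gam (X i \<omega>) (A i \<omega>)) \<partial>M)"
  using model assms unfolding sequential_model_def by auto

lemma L_nn: "0 \<le> L"
proof -
  interpret prob_space "Gam undefined undefined" by (rule Gam_prob)
  have "AE y in Gam undefined undefined. \<bar>y\<bar> \<le> L" using Y_range by blast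
  then have "AE y in Gam undefined undefined. 0 \<le> L" by eventually_elim auto
  then show ?thesis by simp
qed

lemma Gam_int: "integrable (Gam x a) (\<lambda>y. y)" "integrable (Gam x a) (\<lambda>y. y\<^sup>2)"
proof -
  interpret prob_space "Gam x a" by (rule Gam_prob)
  have AE: "AE y in Gam x a. \<bar>y\<bar> \<le> L" using Y_range by blast
  have mb: "(\<lambda>y::real. y) \<in> borel_measurable (Gam x a)" "(\<lambda>y::real. y\<^sup>2) \<in> borel_measurable (Gam x a)"
    by (subst measurable_cong_sets[OF sets_Gam refl], simp)+
  show "integrable (Gam x a) (\<lambda>y. y)"
    by (rule integrable_const_bound[where B=L]) (use AE mb in auto)
  have "AE y in Gam x a. norm (y\<^sup>2) \<le> L\<^sup>2" using AE
  proof eventually_elim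
    case (elim y)
    then have "\<bar>y\<bar> \<le> \<bar>L\<bar>" using L_nn by simp
    then show ?case by (simp add: abs_le_square_iff)
  qed
  then show "integrable (Gam x a) (\<lambda>y. y\<^sup>2)"
    by (intro integrable_const_bound[where B="L\<^sup>2"]) (use mb in auto)
qed

lemma ms_bound: "\<bar>ms x a\<bar> \<le> L"
proof -
  interpret prob_space "Gam x a" by (rule Gam_prob)
  have AE: "AE y in Gam x a. \<bar>y\<bar> \<le> L" using Y_range by blast
  have "\<bar>ms x a\<bar> \<le> (\<integral>y. \<bar>y\<bar> \<partial>Gam x a)" unfolding mu_star_def by (rule integral_abs_bound)
  also have "\<dots> \<le> (\<integral>y. L \<partial>Gam x a)"
    by (rule integral_mono_AE) (use AE Gam_int(1) in auto)
  finally show ?thesis using prob_space by simp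
qed

lemma ms_meas[measurable]: "(\<lambda>(x, a). ms x a) \<in> borel_measurable (MX \<Otimes>\<^sub>M MA)"
proof -
  have "(\<lambda>z. integral\<^sup>L ((\<lambda>(x, a). Gam x a) z) (\<lambda>y::real. y)) \<in> borel_measurable (MX \<Otimes>\<^sub>M MA)"
    by (rule measurable_compose[OF Gam_kernel integral_measurable_subprob_algebra]) simp
  then show ?thesis unfolding mu_star_def by (simp add: split_beta')
qed

lemma sigma_sq_eq: "sigma_sq Gam x a = (\<integral>y. y\<^sup>2 \<partial>Gam x a) - (ms x a)\<^sup>2"
proof -
  interpret prob_space "Gam x a" by (rule Gam_prob)
  have "sigma_sq Gam x a = (\<integral>y. y\<^sup>2 - 2 * ms x a * y + (ms x a)\<^sup>2 \<partial>Gam x a)"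
    unfolding sigma_sq_def by (rule Bochner_Integration.integral_cong; simp add: power2_diff algebra_simps)
  also have "\<dots> = (\<integral>y. y\<^sup>2 \<partial>Gam x a) - 2 * ms x a * ms x a + (ms x a)\<^sup>2"
    using Gam_int prob_space by (simp add: mu_star_def)
  finally show ?thesis by (simp add: power2_eq_square)
qed

lemma sigma_meas[measurable]: "(\<lambda>(x, a). sigma_sq Gam x a) \<in> borel_measurable (MX \<Otimes>\<^sub>M MA)"
proof -
  have "(\<lambda>z. integral\<^sup>L ((\<lambda>(x, a). Gam x a) z) (\<lambda>y::real. y\<^sup>2)) \<in> borel_measurable (MX \<Otimes>\<^sub>M MA)"
    by (rule measurable_compose[OF Gam_kernel integral_measurable_subprob_algebra]) simp
  then show ?thesis unfolding sigma_sq_eq by (simp add: split_beta')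
qed

lemma sigma_nn: "0 \<le> sigma_sq Gam x a"
  unfolding sigma_sq_def by simp

lemma g_comp[measurable]: "f \<in> measurable N MX \<Longrightarrow> k \<in> measurable N MA \<Longrightarrow> (\<lambda>\<omega>. g (f \<omega>) (k \<omega>)) \<in> borel_measurable N"
  using measurable_compose[OF measurable_Pair g_meas] by simp

lemma ms_comp[measurable]: "f \<in> measurable N MX \<Longrightarrow> k \<in> measurable N MA \<Longrightarrow> (\<lambda>\<omega>. ms (f \<omega>) (k \<omega>)) \<in> borel_measurable N"
  using measurable_compose[OF measurable_Pair ms_meas] by simp

lemma sigma_comp[measurable]: "f \<in> measurable N MX \<Longrightarrow> k \<in> measurable N MA \<Longrightarrow> (\<lambda>\<omega>. sigma_sq Gam (f \<omega>) (k \<omega>)) \<in> borel_measurable N"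
  using measurable_compose[OF measurable_Pair sigma_meas] by simp

lemma meas_lamA: "f \<in> borel_measurable (N \<Otimes>\<^sub>M MA) \<Longrightarrow> f \<in> borel_measurable (N \<Otimes>\<^sub>M lamA)" for f :: "_ \<Rightarrow> real"
  by (metis measurable_cong_sets sets_pair_measure_cong sets_lamA)

lemma meas_lamA_nn: "f \<in> borel_measurable (N \<Otimes>\<^sub>M MA) \<Longrightarrow> f \<in> borel_measurable (N \<Otimes>\<^sub>M lamA)" for f :: "_ \<Rightarrow> ennreal"
  by (metis measurable_cong_sets sets_pair_measure_cong sets_lamA)

lemma meas_Xi: "f \<in> borel_measurable MX \<Longrightarrow> f \<in> borel_measurable Xi" for f :: "_ \<Rightarrow> real"
  using measurable_cong_sets[OF sets_Xi refl] by blast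

lemma Is_meas[measurable]: "(\<lambda>x. Is x) \<in> borel_measurable MX"
proof -
  interpret sigma_finite_measure lamA by (rule lamA_sf)
  have "(\<lambda>(x, a). g x a * ms x a) \<in> borel_measurable (MX \<Otimes>\<^sub>M MA)" by measurable
  then have "case_prod (\<lambda>x a. g x a * ms x a) \<in> borel_measurable (MX \<Otimes>\<^sub>M lamA)"
    by (rule meas_lamA)
  then show ?thesis unfolding innerA_def by (rule borel_measurable_lebesgue_integral)
qed

lemma Is_comp[measurable]: "f \<in> measurable N MX \<Longrightarrow> (\<lambda>\<omega>. Is (f \<omega>)) \<in> borel_measurable N"
  using measurable_compose[OF _ Is_meas] by simp

lemma Is_int: "integrable Xi (\<lambda>x. Is x)"
proof -
  interpret prob_space Xi by (rule Xi_prob)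
  show ?thesis
    by (rule square_integrable_imp_integrable[OF _ fin_var])
       (rule meas_Xi[OF Is_meas])
qed

end

locale thm6_i = thm6 +
  fixes i :: nat
  assumes i_lt: "i < n"
begin

abbreviation "H \<equiv> hist X A Y i"

lemma XAY_meas[measurable]: "X i \<in> measurable M MX" "A i \<in> measurable M MA" "Y i \<in> borel_measurable M"
  using model_i[OF i_lt] by auto

lemma H_meas[measurable]: "H \<in> measurable M (HM i)"
proof -
  have "\<And>j. j < n \<Longrightarrow> (\<lambda>\<omega>. (X j \<omega>, A j \<omega>, Y j \<omega>)) \<in> measurable M (MX \<Otimes>\<^sub>M MA \<Otimes>\<^sub>M borel)"
    using model_i by (intro measurable_Pair) auto
  then show ?thesis unfolding hist_def histM_def using i_lt
    by (intro measurable_restrict) auto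
qed

lemma pol_meas: "(\<lambda>(x, hh, a). pol i x hh a) \<in> borel_measurable (MX \<Otimes>\<^sub>M HM i \<Otimes>\<^sub>M MA)"
  using model_i[OF i_lt] by auto

lemma pol_nn: "0 \<le> pol i x hh a"
  using model_i[OF i_lt] by auto

lemma pol_comp[measurable]: "f \<in> measurable N MX \<Longrightarrow> h \<in> measurable N (HM i) \<Longrightarrow> k \<in> measurable N MA
   \<Longrightarrow> (\<lambda>\<omega>. pol i (f \<omega>) (h \<omega>) (k \<omega>)) \<in> borel_measurable N"
  using measurable_compose[OF measurable_Pair[OF _ measurable_Pair] pol_meas] by simp

lemma muhat_meas_i: "(\<lambda>(hh, x, a). muhat i hh x a) \<in> borel_measurable (HM i \<Otimes>\<^sub>M MX \<Otimes>\<^sub>M MA)"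
  using muhat_meas i_lt by auto

lemma muhat_comp[measurable]: "h \<in> measurable N (HM i) \<Longrightarrow> f \<in> measurable N MX \<Longrightarrow> k \<in> measurable N MA
   \<Longrightarrow> (\<lambda>\<omega>. muhat i (h \<omega>) (f \<omega>) (k \<omega>)) \<in> borel_measurable N"
  using measurable_compose[OF measurable_Pair[OF _ measurable_Pair] muhat_meas_i] by simp


lemma stepX:
  fixes f :: "_ \<Rightarrow> real" and E :: "_ \<Rightarrow> real"
  assumes f[measurable]: "f \<in> borel_measurable (HM i \<Otimes>\<^sub>M MX)"
    and fi: "integrable M (\<lambda>\<omega>. f (H \<omega>, X i \<omega>))"
    and E[measurable]: "E \<in> borel_measurable M"
    and E_eq: "AE \<omega> in M. integrable Xi (\<lambda>x. f (H \<omega>, x)) \<longrightarrow> (\<integral>x. f (H \<omega>, x) \<partial>Xi) = E \<omega>"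
  shows "integrable M E" "(\<integral>\<omega>. f (H \<omega>, X i \<omega>) \<partial>M) = (\<integral>\<omega>. E \<omega> \<partial>M)"
proof -
  interpret Xs: sigma_finite_measure Xi using Xi_prob prob_space_imp_sigma_finite by blast
  have kn: "(\<lambda>u. \<integral>\<^sup>+v. h (u, v) \<partial>Xi) \<in> borel_measurable (HM i)"
    if "h \<in> borel_measurable (HM i \<Otimes>\<^sub>M MX)" for h
  proof -
    have "h \<in> borel_measurable (HM i \<Otimes>\<^sub>M Xi)"
      using that by (metis measurable_cong_sets sets_pair_measure_cong sets_Xi)
    then show ?thesis using Xs.borel_measurable_nn_integral[of "\<lambda>u v. h (u, v)"] by simp
  qed
  have ident: "(\<integral>\<^sup>+\<omega>. h (H \<omega>, X i \<omega>) \<partial>M) = (\<integral>\<^sup>+\<omega>. (\<integral>\<^sup>+v. ennreal 1 * h (H \<omega>, v) \<partial>Xi) \<partial>M)"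
    if "h \<in> borel_measurable (HM i \<Otimes>\<^sub>M MX)" for h
    using model_i(6)[OF i_lt that] by simp
  have E_eq': "AE \<omega> in M. integrable Xi (\<lambda>v. 1 * f (H \<omega>, v)) \<longrightarrow> (\<integral>v. 1 * f (H \<omega>, v) \<partial>Xi) = E \<omega>"
    using E_eq by simp
  note D = disint_integral[where N="\<lambda>_. Xi" and p="\<lambda>_ _. 1", OF H_meas XAY_meas(1) sets_Xi _ _ ident kn f fi E E_eq']
  show "integrable M E" by (rule D(2)) (simp_all add: split_beta')
  show "(\<integral>\<omega>. f (H \<omega>, X i \<omega>) \<partial>M) = (\<integral>\<omega>. E \<omega> \<partial>M)" by (rule D(3)) (simp_all add: split_beta')
qed

lemma stepA:
  fixes f :: "_ \<Rightarrow> real" and E :: "_ \<Rightarrow> real"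
  assumes f[measurable]: "f \<in> borel_measurable ((HM i \<Otimes>\<^sub>M MX) \<Otimes>\<^sub>M MA)"
    and fi: "integrable M (\<lambda>\<omega>. f ((H \<omega>, X i \<omega>), A i \<omega>))"
    and E[measurable]: "E \<in> borel_measurable M"
    and E_eq: "AE \<omega> in M. integrable lamA (\<lambda>a. pol i (X i \<omega>) (H \<omega>) a * f ((H \<omega>, X i \<omega>), a)) \<longrightarrow>
        (\<integral>a. pol i (X i \<omega>) (H \<omega>) a * f ((H \<omega>, X i \<omega>), a) \<partial>lamA) = E \<omega>"
  shows "AE \<omega> in M. integrable lamA (\<lambda>a. pol i (X i \<omega>) (H \<omega>) a * f ((H \<omega>, X i \<omega>), a))"
    "integrable M E" "(\<integral>\<omega>. f ((H \<omega>, X i \<omega>), A i \<omega>) \<partial>M) = (\<integral>\<omega>. E \<omega> \<partial>M)"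
proof -
  interpret As: sigma_finite_measure lamA by (rule lamA_sf)
  have kn: "(\<lambda>u. \<integral>\<^sup>+v. h (u, v) \<partial>lamA) \<in> borel_measurable (HM i \<Otimes>\<^sub>M MX)"
    if "h \<in> borel_measurable ((HM i \<Otimes>\<^sub>M MX) \<Otimes>\<^sub>M MA)" for h
  proof -
    have "h \<in> borel_measurable ((HM i \<Otimes>\<^sub>M MX) \<Otimes>\<^sub>M lamA)"
      using that by (rule meas_lamA_nn)
    then show ?thesis using As.borel_measurable_nn_integral[of "\<lambda>u v. h (u, v)"] by simp
  qed
  have ident: "(\<integral>\<^sup>+\<omega>. h ((H \<omega>, X i \<omega>), A i \<omega>) \<partial>M) =
      (\<integral>\<^sup>+\<omega>. (\<integral>\<^sup>+v. ennreal (pol i (snd (H \<omega>, X i \<omega>)) (fst (H \<omega>, X i \<omega>)) v) * h ((H \<omega>, X i \<omega>), v) \<partial>lamA) \<partial>M)"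
    if hm[measurable]: "h \<in> borel_measurable ((HM i \<Otimes>\<^sub>M MX) \<Otimes>\<^sub>M MA)" for h
  proof -
    have T: "(\<lambda>z. ((fst z, fst (snd z)), snd (snd z))) \<in> measurable (HM i \<Otimes>\<^sub>M MX \<Otimes>\<^sub>M MA) ((HM i \<Otimes>\<^sub>M MX) \<Otimes>\<^sub>M MA)"
      by (intro measurable_Pair measurable_fst'' measurable_snd'' measurable_ident_sets refl) 
    have "(\<lambda>z. h ((fst z, fst (snd z)), snd (snd z))) \<in> borel_measurable (HM i \<Otimes>\<^sub>M MX \<Otimes>\<^sub>M MA)"
      using measurable_compose[OF T hm] by simp
    from model_i(7)[OF i_lt this] show ?thesis by simp
  qed
  have pm: "(\<lambda>(u, v). pol i (snd u) (fst u) v) \<in> borel_measurable ((HM i \<Otimes>\<^sub>M MX) \<Otimes>\<^sub>M MA)"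
    unfolding split_beta' by (intro pol_comp measurable_fst'' measurable_snd'' measurable_ident_sets refl)
  have E_eq': "AE \<omega> in M. integrable lamA (\<lambda>a. pol i (snd (H \<omega>, X i \<omega>)) (fst (H \<omega>, X i \<omega>)) a * f ((H \<omega>, X i \<omega>), a)) \<longrightarrow>
        (\<integral>a. pol i (snd (H \<omega>, X i \<omega>)) (fst (H \<omega>, X i \<omega>)) a * f ((H \<omega>, X i \<omega>), a) \<partial>lamA) = E \<omega>"
    using E_eq by simp
  have Um: "(\<lambda>\<omega>. (H \<omega>, X i \<omega>)) \<in> measurable M (HM i \<Otimes>\<^sub>M MX)" by (intro measurable_Pair H_meas XAY_meas)
  note D = disint_integral[where N="\<lambda>_. lamA" and p="\<lambda>u a. pol i (snd u) (fst u) a", OF Um XAY_meas(2) sets_lamA pm pol_nn ident kn f fi E E_eq']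
  show "AE \<omega> in M. integrable lamA (\<lambda>a. pol i (X i \<omega>) (H \<omega>) a * f ((H \<omega>, X i \<omega>), a))"
    using D(1) by (simp only: fst_conv snd_conv)
  show "integrable M E" by (rule D(2))
  show "(\<integral>\<omega>. f ((H \<omega>, X i \<omega>), A i \<omega>) \<partial>M) = (\<integral>\<omega>. E \<omega> \<partial>M)" by (rule D(3))
qed

lemma stepY:
  fixes f :: "_ \<Rightarrow> real" and E :: "_ \<Rightarrow> real"
  assumes f[measurable]: "f \<in> borel_measurable ((HM i \<Otimes>\<^sub>M MX \<Otimes>\<^sub>M MA) \<Otimes>\<^sub>M borel)"
    and fi: "integrable M (\<lambda>\<omega>. f ((H \<omega>, X i \<omega>, A i \<omega>), Y i \<omega>))"
    and E[measurable]: "E \<in> borel_measurable M"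
    and E_eq: "AE \<omega> in M. integrable (Gam (X i \<omega>) (A i \<omega>)) (\<lambda>y. f ((H \<omega>, X i \<omega>, A i \<omega>), y)) \<longrightarrow>
        (\<integral>y. f ((H \<omega>, X i \<omega>, A i \<omega>), y) \<partial>Gam (X i \<omega>) (A i \<omega>)) = E \<omega>"
  shows "integrable M E" "(\<integral>\<omega>. f ((H \<omega>, X i \<omega>, A i \<omega>), Y i \<omega>) \<partial>M) = (\<integral>\<omega>. E \<omega> \<partial>M)"
proof -
  have Gk: "(\<lambda>u. Gam (fst (snd u)) (snd (snd u))) \<in> measurable (HM i \<Otimes>\<^sub>M MX \<Otimes>\<^sub>M MA) (subprob_algebra borel)"
    using measurable_compose[OF measurable_snd Gam_kernel] by (simp add: split_beta')
  have kn: "(\<lambda>u. \<integral>\<^sup>+v. h (u, v) \<partial>Gam (fst (snd u)) (snd (snd u))) \<in> borel_measurable (HM i \<Otimes>\<^sub>M MX \<Otimes>\<^sub>M MA)"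
    if "h \<in> borel_measurable ((HM i \<Otimes>\<^sub>M MX \<Otimes>\<^sub>M MA) \<Otimes>\<^sub>M borel)" for h
    using nn_integral_measurable_subprob_algebra2[of "\<lambda>u v. h (u, v)", OF _ Gk] that by simp
  have ident: "(\<integral>\<^sup>+\<omega>. h ((H \<omega>, X i \<omega>, A i \<omega>), Y i \<omega>) \<partial>M) =
      (\<integral>\<^sup>+\<omega>. (\<integral>\<^sup>+v. ennreal 1 * h ((H \<omega>, X i \<omega>, A i \<omega>), v)
          \<partial>Gam (fst (snd (H \<omega>, X i \<omega>, A i \<omega>))) (snd (snd (H \<omega>, X i \<omega>, A i \<omega>)))) \<partial>M)"
    if hm[measurable]: "h \<in> borel_measurable ((HM i \<Otimes>\<^sub>M MX \<Otimes>\<^sub>M MA) \<Otimes>\<^sub>M borel)" for h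
  proof -
    have T: "(\<lambda>z. ((fst z, fst (snd z), fst (snd (snd z))), snd (snd (snd z)))) \<in> measurable (HM i \<Otimes>\<^sub>M MX \<Otimes>\<^sub>M MA \<Otimes>\<^sub>M borel) ((HM i \<Otimes>\<^sub>M MX \<Otimes>\<^sub>M MA) \<Otimes>\<^sub>M borel)"
      by (intro measurable_Pair measurable_fst'' measurable_snd'' measurable_ident_sets refl) 
    have "(\<lambda>z. h ((fst z, fst (snd z), fst (snd (snd z))), snd (snd (snd z)))) \<in> borel_measurable (HM i \<Otimes>\<^sub>M MX \<Otimes>\<^sub>M MA \<Otimes>\<^sub>M borel)"
      using measurable_compose[OF T hm] by simp
    from model_i(8)[OF i_lt this] show ?thesis by simp
  qed
  have E_eq': "AE \<omega> in M. integrable (Gam (fst (snd (H \<omega>, X i \<omega>, A i \<omega>))) (snd (snd (H \<omega>, X i \<omega>, A i \<omega>)))) (\<lambda>y. 1 * f ((H \<omega>, X i \<omega>, A i \<omega>), y)) \<longrightarrow>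
        (\<integral>y. 1 * f ((H \<omega>, X i \<omega>, A i \<omega>), y) \<partial>Gam (fst (snd (H \<omega>, X i \<omega>, A i \<omega>))) (snd (snd (H \<omega>, X i \<omega>, A i \<omega>)))) = E \<omega>"
    using E_eq by simp
  have Um: "(\<lambda>\<omega>. (H \<omega>, X i \<omega>, A i \<omega>)) \<in> measurable M (HM i \<Otimes>\<^sub>M MX \<Otimes>\<^sub>M MA)" by (intro measurable_Pair H_meas XAY_meas)
  note D = disint_integral[where N="\<lambda>u. Gam (fst (snd u)) (snd (snd u))" and p="\<lambda>_ _. 1", OF Um XAY_meas(3) sets_Gam _ _ ident kn f fi E E_eq']
  show "integrable M E" by (rule D(2)) (simp_all add: split_beta')
  show "(\<integral>\<omega>. f ((H \<omega>, X i \<omega>, A i \<omega>), Y i \<omega>) \<partial>M) = (\<integral>\<omega>. E \<omega> \<partial>M)" by (rule D(3)) (simp_all add: split_beta')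
qed

end

lemma abs_prod_le: "\<bar>a * b\<bar> \<le> a\<^sup>2 + (b::real)\<^sup>2"
proof -
  have "0 \<le> (\<bar>a\<bar> - \<bar>b\<bar>)\<^sup>2" by simp
  then have "2 * (\<bar>a\<bar> * \<bar>b\<bar>) \<le> a\<^sup>2 + b\<^sup>2" by (simp add: power2_diff power2_abs)
  moreover have "0 \<le> \<bar>a\<bar> * \<bar>b\<bar>" by simp
  moreover have "\<bar>a * b\<bar> = \<bar>a\<bar> * \<bar>b\<bar>" by (simp add: abs_mult)
  ultimately show ?thesis by linarith
qed

lemma sq_add_le: "(a + b)\<^sup>2 \<le> 2 * a\<^sup>2 + 2 * (b::real)\<^sup>2"
proof -
  have "0 \<le> (a - b)\<^sup>2" by simp
  then show ?thesis by (simp add: power2_diff power2_sum)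
qed

lemma L2_mult:
  fixes f g :: "_ \<Rightarrow> real"
  assumes [measurable]: "f \<in> borel_measurable M" "g \<in> borel_measurable M"
    and "integrable M (\<lambda>x. (f x)\<^sup>2)" "integrable M (\<lambda>x. (g x)\<^sup>2)"
  shows "integrable M (\<lambda>x. f x * g x)"
  by (rule Bochner_Integration.integrable_bound[OF Bochner_Integration.integrable_add[OF assms(3,4)]])
     (auto intro: order_trans[OF abs_prod_le])

lemma L2_add:
  fixes f g :: "_ \<Rightarrow> real"
  assumes [measurable]: "f \<in> borel_measurable M" "g \<in> borel_measurable M"
    and "integrable M (\<lambda>x. (f x)\<^sup>2)" "integrable M (\<lambda>x. (g x)\<^sup>2)"
  shows "integrable M (\<lambda>x. (f x + g x)\<^sup>2)"
  by (rule Bochner_Integration.integrable_bound[OF Bochner_Integration.integrable_add[OF integrable_mult_right[OF assms(3)] integrable_mult_right[OF assms(4)], of 2 2]])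
     (auto intro: order_trans[OF sq_add_le])

lemma L2_diff:
  fixes f g :: "_ \<Rightarrow> real"
  assumes [measurable]: "f \<in> borel_measurable M" "g \<in> borel_measurable M"
    and "integrable M (\<lambda>x. (f x)\<^sup>2)" "integrable M (\<lambda>x. (g x)\<^sup>2)"
  shows "integrable M (\<lambda>x. (f x - g x)\<^sup>2)"
  using L2_add[of f M "\<lambda>x. - g x"] assms by simp

lemma jensen_w:
  fixes p u :: "_ \<Rightarrow> real"
  assumes "\<And>x. 0 \<le> p x" "integrable N p" "(\<integral>x. p x \<partial>N) = 1"
    "integrable N (\<lambda>x. p x * u x)" "integrable N (\<lambda>x. p x * (u x)\<^sup>2)"
  shows "(\<integral>x. p x * u x \<partial>N)\<^sup>2 \<le> (\<integral>x. p x * (u x)\<^sup>2 \<partial>N)"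
proof -
  define t where "t = (\<integral>x. p x * u x \<partial>N)"
  have "0 \<le> (\<integral>x. p x * (u x - t)\<^sup>2 \<partial>N)" using assms(1) by (intro Bochner_Integration.integral_nonneg) auto
  also have "(\<lambda>x. p x * (u x - t)\<^sup>2) = (\<lambda>x. p x * (u x)\<^sup>2 - 2 * t * (p x * u x) + t\<^sup>2 * p x)"
    by (auto simp: power2_diff algebra_simps)
  also have "(\<integral>x. p x * (u x)\<^sup>2 - 2 * t * (p x * u x) + t\<^sup>2 * p x \<partial>N)
      = (\<integral>x. p x * (u x)\<^sup>2 \<partial>N) - 2 * t * t + t\<^sup>2 * 1"
    using assms(2-5) by (simp add: t_def)
  finally show ?thesis by (simp add: t_def power2_eq_square)
qed

context thm6
begin

lemma intA_meas:
  fixes k :: "_ \<Rightarrow> _ \<Rightarrow> real"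
  assumes "(\<lambda>(u, a). k u a) \<in> borel_measurable (N \<Otimes>\<^sub>M MA)"
  shows "(\<lambda>u. \<integral>a. k u a \<partial>lamA) \<in> borel_measurable N"
proof -
  interpret As: sigma_finite_measure lamA by (rule lamA_sf)
  have "(\<lambda>(u, a). k u a) \<in> borel_measurable (N \<Otimes>\<^sub>M lamA)" using assms by (rule meas_lamA)
  then show ?thesis by (rule As.borel_measurable_lebesgue_integral)
qed

lemma Gam_meas: "f \<in> borel_measurable borel \<Longrightarrow> f \<in> borel_measurable (Gam x a)" for f :: "real \<Rightarrow> real"
  using measurable_cong_sets[OF sets_Gam refl] by blast

lemma Gam_AE: "AE y in Gam x a. \<bar>y\<bar> \<le> L" using Y_range by blast

end

context thm6_i
begin

abbreviation "Ih h x \<equiv> innerA lamA (g x) (muhat i h x)"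

lemma Ih_meas[measurable]: "(\<lambda>(h, x). Ih h x) \<in> borel_measurable (HM i \<Otimes>\<^sub>M MX)"
proof -
  have "(\<lambda>(u, a). g (snd u) a * muhat i (fst u) (snd u) a) \<in> borel_measurable ((HM i \<Otimes>\<^sub>M MX) \<Otimes>\<^sub>M MA)"
    unfolding split_beta' by measurable
  from intA_meas[OF this] show ?thesis unfolding innerA_def by (simp add: split_beta')
qed

lemma Ih_comp[measurable]: "h \<in> measurable N (HM i) \<Longrightarrow> f \<in> measurable N MX \<Longrightarrow> (\<lambda>\<omega>. Ih (h \<omega>) (f \<omega>)) \<in> borel_measurable N"
  using measurable_compose[OF measurable_Pair Ih_meas] by simp

lemma Ybound: "AE \<omega> in M. \<bar>Y i \<omega>\<bar> \<le> L"
proof -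
  interpret prob_space M by (rule M_prob)
  have fm: "(\<lambda>z. if L < \<bar>snd z\<bar> then 1 else (0::real)) \<in> borel_measurable ((HM i \<Otimes>\<^sub>M MX \<Otimes>\<^sub>M MA) \<Otimes>\<^sub>M borel)"
    by measurable
  have fi: "integrable M (\<lambda>\<omega>. if L < \<bar>Y i \<omega>\<bar> then 1 else (0::real))"
    by (rule integrable_const_bound[where B=1]) auto
  have "(\<integral>\<omega>. (\<lambda>z. if L < \<bar>snd z\<bar> then 1 else (0::real)) ((H \<omega>, X i \<omega>, A i \<omega>), Y i \<omega>) \<partial>M) = (\<integral>\<omega>. 0 \<partial>M)"
  proof (rule stepY(2)[OF fm])
    show "AE \<omega> in M. integrable (Gam (X i \<omega>) (A i \<omega>)) (\<lambda>y. (\<lambda>z. if L < \<bar>snd z\<bar> then 1 else (0::real)) ((H \<omega>, X i \<omega>, A i \<omega>), y)) \<longrightarrow>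
        (\<integral>y. (\<lambda>z. if L < \<bar>snd z\<bar> then 1 else (0::real)) ((H \<omega>, X i \<omega>, A i \<omega>), y) \<partial>Gam (X i \<omega>) (A i \<omega>)) = 0"
    proof (intro AE_I2 impI)
      fix \<omega> show "(\<integral>y. (\<lambda>z. if L < \<bar>snd z\<bar> then 1 else (0::real)) ((H \<omega>, X i \<omega>, A i \<omega>), y) \<partial>Gam (X i \<omega>) (A i \<omega>)) = 0"
        using Gam_AE[of "X i \<omega>" "A i \<omega>"] by (intro integral_eq_zero_AE) (auto elim!: eventually_mono)
    qed
  qed (use fi in simp_all)
  then have "(\<integral>\<omega>. (if L < \<bar>Y i \<omega>\<bar> then 1 else (0::real)) \<partial>M) = 0" by simp
  then have "AE \<omega> in M. (if L < \<bar>Y i \<omega>\<bar> then 1 else (0::real)) = 0"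
    using integral_nonneg_eq_0_iff_AE[OF fi] by simp
  then show ?thesis by eventually_elim (auto split: if_splits)
qed

end

context thm6
begin

lemma thm6_i_at: "j < n \<Longrightarrow> thm6_i M MX MA lamA Xi Gam pol X A Y g muhat F n L B j"
  by (intro thm6_i.intro thm6_axioms thm6_i_axioms.intro)

lemma Ybound_all: "AE \<omega> in M. \<forall>j. j < n \<longrightarrow> \<bar>Y j \<omega>\<bar> \<le> L"
proof -
  have "AE \<omega> in M. j < n \<longrightarrow> \<bar>Y j \<omega>\<bar> \<le> L" for j
  proof (cases "j < n")
    case True
    interpret T: thm6_i M MX MA lamA Xi Gam pol X A Y g muhat F n L B j by (rule thm6_i_at[OF True])
    show ?thesis using T.Ybound by auto
  qed simp
  then show ?thesis by (simp add: AE_all_countable)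
qed

lemma mu_comp: "mu \<in> F \<Longrightarrow> f \<in> measurable N MX \<Longrightarrow> k \<in> measurable N MA \<Longrightarrow> (\<lambda>\<omega>. mu (f \<omega>) (k \<omega>)) \<in> borel_measurable N"
  using measurable_compose[OF measurable_Pair, of f N MX k MA "\<lambda>(x, a). mu x a" borel] F_meas by auto

lemma mu_bound: "mu \<in> F \<Longrightarrow> \<bar>mu x a\<bar> \<le> L"
  using F_meas by auto

lemma sqterm_meas: "j < n \<Longrightarrow> (\<lambda>\<omega>. (Y j \<omega> - muhat j (hist X A Y j \<omega>) (X j \<omega>) (A j \<omega>))\<^sup>2) \<in> borel_measurable M"
proof -
  assume j: "j < n"
  interpret T: thm6_i M MX MA lamA Xi Gam pol X A Y g muhat F n L B j by (rule thm6_i_at[OF j])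
  show ?thesis by measurable
qed

lemma muterm_meas: "j < n \<Longrightarrow> mu \<in> F \<Longrightarrow> (\<lambda>\<omega>. (Y j \<omega> - mu (X j \<omega>) (A j \<omega>))\<^sup>2) \<in> borel_measurable M"
proof -
  assume j: "j < n" and mu: "mu \<in> F"
  interpret T: thm6_i M MX MA lamA Xi Gam pol X A Y g muhat F n L B j by (rule thm6_i_at[OF j])
  note mu_comp[OF mu, measurable]
  show ?thesis by measurable
qed

lemma sq_bound2: "\<bar>y\<bar> \<le> L \<Longrightarrow> \<bar>z\<bar> \<le> L \<Longrightarrow> (y - z)\<^sup>2 \<le> (2 * L)\<^sup>2"
proof -
  assume "\<bar>y\<bar> \<le> L" "\<bar>z\<bar> \<le> L"
  then have "\<bar>y - z\<bar> \<le> \<bar>2 * L\<bar>" by linarith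
  then show ?thesis by (simp only: abs_le_square_iff)
qed

lemma muterm_int: "j < n \<Longrightarrow> mu \<in> F \<Longrightarrow> integrable M (\<lambda>\<omega>. (Y j \<omega> - mu (X j \<omega>) (A j \<omega>))\<^sup>2)"
proof -
  assume j: "j < n" and mu: "mu \<in> F"
  interpret prob_space M by (rule M_prob)
  show ?thesis
  proof (rule integrable_const_bound[where B="(2 * L)\<^sup>2"])
    show "AE \<omega> in M. norm ((Y j \<omega> - mu (X j \<omega>) (A j \<omega>))\<^sup>2) \<le> (2 * L)\<^sup>2"
      using Ybound_all
    proof eventually_elim
      case (elim \<omega>)
      have "(Y j \<omega> - mu (X j \<omega>) (A j \<omega>))\<^sup>2 \<le> (2 * L)\<^sup>2"
        by (rule sq_bound2) (use elim j mu_bound[OF mu] in auto)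
      then show ?case by simp
    qed
  qed (rule muterm_meas[OF j mu])
qed

definition SQ where "SQ \<omega> = (\<Sum>j<n. (Y j \<omega> - muhat j (hist X A Y j \<omega>) (X j \<omega>) (A j \<omega>))\<^sup>2)"
definition Qf where "Qf \<omega> = (INF mu\<in>F. \<Sum>j<n. (Y j \<omega> - mu (X j \<omega>) (A j \<omega>))\<^sup>2)"

lemma regret_eq: "regret F muhat X A Y n \<omega> = SQ \<omega> - Qf \<omega>"
  unfolding regret_def SQ_def Qf_def by simp

lemma SQ_meas[measurable]: "SQ \<in> borel_measurable M"
  unfolding SQ_def by (intro borel_measurable_sum sqterm_meas) simp

lemma Qf_nn: "0 \<le> Qf \<omega>"
  unfolding Qf_def by (rule cINF_greatest[OF F_ne]) (simp add: sum_nonneg)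

lemma Qf_le: "mu \<in> F \<Longrightarrow> Qf \<omega> \<le> (\<Sum>j<n. (Y j \<omega> - mu (X j \<omega>) (A j \<omega>))\<^sup>2)"
  unfolding Qf_def by (rule cINF_lower) (auto intro!: bdd_belowI[of _ 0] sum_nonneg)

lemma Qf_meas[measurable]: "Qf \<in> borel_measurable M"
proof -
  have "regret F muhat X A Y n \<in> borel_measurable M" using fin_regret by auto
  then have "(\<lambda>\<omega>. SQ \<omega> - regret F muhat X A Y n \<omega>) \<in> borel_measurable M" by measurable
  then show ?thesis by (simp add: regret_eq)
qed

lemma Qf_int: "integrable M Qf"
proof -
  interpret prob_space M by (rule M_prob)
  obtain mu0 where mu0: "mu0 \<in> F" using F_ne by blast
  show ?thesis
  proof (rule integrable_const_bound[where B="real n * (2 * L)\<^sup>2"])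
    show "AE \<omega> in M. norm (Qf \<omega>) \<le> real n * (2 * L)\<^sup>2"
      using Ybound_all
    proof eventually_elim
      case (elim \<omega>)
      have "Qf \<omega> \<le> (\<Sum>j<n. (Y j \<omega> - mu0 (X j \<omega>) (A j \<omega>))\<^sup>2)" by (rule Qf_le[OF mu0])
      also have "\<dots> \<le> (\<Sum>j<n. (2 * L)\<^sup>2)"
        using elim mu_bound[OF mu0] by (intro sum_mono sq_bound2) auto
      finally show ?case using Qf_nn[of \<omega>] by simp
    qed
  qed simp
qed

lemma SQ_int: "integrable M SQ"
proof -
  have "integrable M (\<lambda>\<omega>. regret F muhat X A Y n \<omega> + Qf \<omega>)"
    using fin_regret Qf_int by simp
  then show ?thesis by (simp add: regret_eq)
qed

lemma sq_int: "j < n \<Longrightarrow> integrable M (\<lambda>\<omega>. (Y j \<omega> - muhat j (hist X A Y j \<omega>) (X j \<omega>) (A j \<omega>))\<^sup>2)"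
proof (rule Bochner_Integration.integrable_bound[OF SQ_int sqterm_meas], assumption)
  assume j: "j < n"
  show "AE \<omega> in M. norm ((Y j \<omega> - muhat j (hist X A Y j \<omega>) (X j \<omega>) (A j \<omega>))\<^sup>2) \<le> norm (SQ \<omega>)"
  proof (intro AE_I2)
    fix \<omega>
    have "(Y j \<omega> - muhat j (hist X A Y j \<omega>) (X j \<omega>) (A j \<omega>))\<^sup>2 \<le> SQ \<omega>"
      unfolding SQ_def using j by (intro member_le_sum) auto
    moreover have "0 \<le> SQ \<omega>" unfolding SQ_def by (simp add: sum_nonneg)
    ultimately show "norm ((Y j \<omega> - muhat j (hist X A Y j \<omega>) (X j \<omega>) (A j \<omega>))\<^sup>2) \<le> norm (SQ \<omega>)" by simp
  qed
qed

lemma regret_bound: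
  assumes mu: "mu \<in> F"
  shows "(\<Sum>j<n. \<integral>\<omega>. (Y j \<omega> - muhat j (hist X A Y j \<omega>) (X j \<omega>) (A j \<omega>))\<^sup>2 \<partial>M)
     \<le> (\<integral>\<omega>. regret F muhat X A Y n \<omega> \<partial>M) + (\<Sum>j<n. \<integral>\<omega>. (Y j \<omega> - mu (X j \<omega>) (A j \<omega>))\<^sup>2 \<partial>M)"
proof -
  have "(\<Sum>j<n. \<integral>\<omega>. (Y j \<omega> - muhat j (hist X A Y j \<omega>) (X j \<omega>) (A j \<omega>))\<^sup>2 \<partial>M) = (\<integral>\<omega>. SQ \<omega> \<partial>M)"
    unfolding SQ_def by (rule Bochner_Integration.integral_sum[symmetric]) (rule sq_int, simp)
  also have "\<dots> = (\<integral>\<omega>. regret F muhat X A Y n \<omega> + Qf \<omega> \<partial>M)" by (simp add: regret_eq)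
  also have "\<dots> = (\<integral>\<omega>. regret F muhat X A Y n \<omega> \<partial>M) + (\<integral>\<omega>. Qf \<omega> \<partial>M)"
    using fin_regret Qf_int by (rule Bochner_Integration.integral_add)
  also have "(\<integral>\<omega>. Qf \<omega> \<partial>M) \<le> (\<integral>\<omega>. (\<Sum>j<n. (Y j \<omega> - mu (X j \<omega>) (A j \<omega>))\<^sup>2) \<partial>M)"
    using Qf_int muterm_int[OF _ mu] by (intro integral_mono Qf_le[OF mu]) auto
  also have "\<dots> = (\<Sum>j<n. \<integral>\<omega>. (Y j \<omega> - mu (X j \<omega>) (A j \<omega>))\<^sup>2 \<partial>M)"
    by (rule Bochner_Integration.integral_sum) (rule muterm_int[OF _ mu], simp)
  finally show ?thesis by simp
qed

end

context thm6_i
begin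

abbreviation "Cf u \<equiv> \<integral>a. pol i (snd u) (fst u) a \<partial>lamA"

lemma polu_meas: "(\<lambda>(u, a). pol i (snd u) (fst u) a) \<in> borel_measurable ((HM i \<Otimes>\<^sub>M MX) \<Otimes>\<^sub>M MA)"
  unfolding split_beta' by (intro pol_comp measurable_fst'' measurable_snd'' measurable_ident_sets refl)

lemma Cf_meas[measurable]: "(\<lambda>u. Cf u) \<in> borel_measurable (HM i \<Otimes>\<^sub>M MX)"
  by (rule intA_meas[OF polu_meas])

lemma HX_meas[measurable]: "(\<lambda>\<omega>. (H \<omega>, X i \<omega>)) \<in> measurable M (HM i \<Otimes>\<^sub>M MX)"
  by (intro measurable_Pair H_meas XAY_meas)

lemma C_meas[measurable]: "(\<lambda>\<omega>. Cf (H \<omega>, X i \<omega>)) \<in> borel_measurable M"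
  using measurable_compose[OF HX_meas Cf_meas] by simp

lemma C_one: "AE \<omega> in M. integrable lamA (\<lambda>a. pol i (X i \<omega>) (H \<omega>) a) \<and> (\<integral>a. pol i (X i \<omega>) (H \<omega>) a \<partial>lamA) = 1"
proof -
  interpret prob_space M by (rule M_prob)
  define C where "C = (\<lambda>\<omega>. Cf (H \<omega>, X i \<omega>))"
  have Cm[measurable]: "C \<in> borel_measurable M" unfolding C_def by (rule C_meas)
  have f1m: "(\<lambda>z. 1::real) \<in> borel_measurable ((HM i \<Otimes>\<^sub>M MX) \<Otimes>\<^sub>M MA)" by simp
  have E1: "AE \<omega> in M. integrable lamA (\<lambda>a. pol i (X i \<omega>) (H \<omega>) a * (\<lambda>z. 1::real) ((H \<omega>, X i \<omega>), a)) \<longrightarrow>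
        (\<integral>a. pol i (X i \<omega>) (H \<omega>) a * (\<lambda>z. 1::real) ((H \<omega>, X i \<omega>), a) \<partial>lamA) = C \<omega>"
    by (simp add: C_def)
  note S1 = stepA[OF f1m _ Cm E1]
  have AEi: "AE \<omega> in M. integrable lamA (\<lambda>a. pol i (X i \<omega>) (H \<omega>) a)" using S1(1) by simp
  have Ci: "integrable M C" using S1(2) by simp
  have intC: "(\<integral>\<omega>. C \<omega> \<partial>M) = 1" using S1(3) prob_space by simp
  have f2m[measurable]: "(\<lambda>z. if 1 < Cf (fst z) then 1 else (0::real)) \<in> borel_measurable ((HM i \<Otimes>\<^sub>M MX) \<Otimes>\<^sub>M MA)" by measurable
  define E2 where "E2 = (\<lambda>\<omega>. if 1 < C \<omega> then C \<omega> else 0)"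
  have E2m[measurable]: "E2 \<in> borel_measurable M" unfolding E2_def by measurable
  have f2i: "integrable M (\<lambda>\<omega>. (\<lambda>z. if 1 < Cf (fst z) then 1 else (0::real)) ((H \<omega>, X i \<omega>), A i \<omega>))"
  proof (rule integrable_const_bound[where B=1])
    show "(\<lambda>\<omega>. (\<lambda>z. if 1 < Cf (fst z) then 1 else (0::real)) ((H \<omega>, X i \<omega>), A i \<omega>)) \<in> borel_measurable M"
      by (rule measurable_compose[OF measurable_Pair[OF HX_meas XAY_meas(2)] f2m])
  qed simp
  have E2eq: "AE \<omega> in M. integrable lamA (\<lambda>a. pol i (X i \<omega>) (H \<omega>) a * (\<lambda>z. if 1 < Cf (fst z) then 1 else (0::real)) ((H \<omega>, X i \<omega>), a)) \<longrightarrow>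
        (\<integral>a. pol i (X i \<omega>) (H \<omega>) a * (\<lambda>z. if 1 < Cf (fst z) then 1 else (0::real)) ((H \<omega>, X i \<omega>), a) \<partial>lamA) = E2 \<omega>"
    by (intro AE_I2) (auto simp: E2_def C_def)
  note S2 = stepA[OF f2m f2i E2m E2eq]
  define G where "G = (\<lambda>\<omega>. if 1 < C \<omega> then C \<omega> - 1 else (0::real))"
  have Geq: "G = (\<lambda>\<omega>. E2 \<omega> - (\<lambda>z. if 1 < Cf (fst z) then 1 else (0::real)) ((H \<omega>, X i \<omega>), A i \<omega>))"
    by (auto simp: G_def E2_def  C_def)
  have Gi: "integrable M G" unfolding Geq using S2(2) f2i by simp
  have "(\<integral>\<omega>. G \<omega> \<partial>M) = 0" unfolding Geq using S2(2,3) f2i by simp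
  then have "AE \<omega> in M. G \<omega> = 0"
    using integral_nonneg_eq_0_iff_AE[OF Gi] by (simp add: G_def)
  then have AEle: "AE \<omega> in M. C \<omega> \<le> 1" by eventually_elim (auto simp: G_def split: if_splits)
  have i1C: "integrable M (\<lambda>\<omega>. 1 - C \<omega>)" using Ci by simp
  have "(\<integral>\<omega>. 1 - C \<omega> \<partial>M) = 0" using Ci intC by (simp add: prob_space)
  then have "AE \<omega> in M. 1 - C \<omega> = 0"
    using integral_nonneg_eq_0_iff_AE[OF i1C] AEle by simp
  then show ?thesis using AEi by eventually_elim (simp add: C_def)
qed

lemma condA:
  fixes u :: "_ \<Rightarrow> real"
  assumes um[measurable]: "u \<in> borel_measurable ((HM i \<Otimes>\<^sub>M MX) \<Otimes>\<^sub>M MA)"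
    and u2: "integrable M (\<lambda>\<omega>. (u ((H \<omega>, X i \<omega>), A i \<omega>))\<^sup>2)"
    and uint: "\<And>hh x. integrable lamA (\<lambda>a. pol i x hh a * u ((hh, x), a))"
  shows "(\<lambda>\<omega>. \<integral>a. pol i (X i \<omega>) (H \<omega>) a * u ((H \<omega>, X i \<omega>), a) \<partial>lamA) \<in> borel_measurable M"
    and "integrable M (\<lambda>\<omega>. (\<integral>a. pol i (X i \<omega>) (H \<omega>) a * u ((H \<omega>, X i \<omega>), a) \<partial>lamA)\<^sup>2)"
    and "(\<integral>\<omega>. (\<integral>a. pol i (X i \<omega>) (H \<omega>) a * u ((H \<omega>, X i \<omega>), a) \<partial>lamA)\<^sup>2 \<partial>M)
         \<le> (\<integral>\<omega>. (u ((H \<omega>, X i \<omega>), A i \<omega>))\<^sup>2 \<partial>M)"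
    and "\<And>\<psi>. \<psi> \<in> borel_measurable (HM i \<Otimes>\<^sub>M MX) \<Longrightarrow> integrable M (\<lambda>\<omega>. (\<psi> (H \<omega>, X i \<omega>))\<^sup>2) \<Longrightarrow>
        (\<integral>\<omega>. \<psi> (H \<omega>, X i \<omega>) * u ((H \<omega>, X i \<omega>), A i \<omega>) \<partial>M)
        = (\<integral>\<omega>. \<psi> (H \<omega>, X i \<omega>) * (\<integral>a. pol i (X i \<omega>) (H \<omega>) a * u ((H \<omega>, X i \<omega>), a) \<partial>lamA) \<partial>M)"
proof -
  define Cu where "Cu = (\<lambda>\<omega>. \<integral>a. pol i (X i \<omega>) (H \<omega>) a * u ((H \<omega>, X i \<omega>), a) \<partial>lamA)"
  define Q where "Q = (\<lambda>\<omega>. \<integral>a. pol i (X i \<omega>) (H \<omega>) a * (u ((H \<omega>, X i \<omega>), a))\<^sup>2 \<partial>lamA)"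
  have k1: "(\<lambda>(v, a). pol i (snd v) (fst v) a * u (v, a)) \<in> borel_measurable ((HM i \<Otimes>\<^sub>M MX) \<Otimes>\<^sub>M MA)"
    using polu_meas unfolding split_beta' by measurable
  have k2: "(\<lambda>(v, a). pol i (snd v) (fst v) a * (u (v, a))\<^sup>2) \<in> borel_measurable ((HM i \<Otimes>\<^sub>M MX) \<Otimes>\<^sub>M MA)"
    using polu_meas unfolding split_beta' by measurable
  have Cum[measurable]: "Cu \<in> borel_measurable M"
    using measurable_compose[OF HX_meas intA_meas[OF k1]] by (simp add: Cu_def)
  then show "(\<lambda>\<omega>. \<integral>a. pol i (X i \<omega>) (H \<omega>) a * u ((H \<omega>, X i \<omega>), a) \<partial>lamA) \<in> borel_measurable M"
    by (simp add: Cu_def)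
  have Qm[measurable]: "Q \<in> borel_measurable M"
    using measurable_compose[OF HX_meas intA_meas[OF k2]] by (simp add: Q_def)
  have f2m: "(\<lambda>z. (u z)\<^sup>2) \<in> borel_measurable ((HM i \<Otimes>\<^sub>M MX) \<Otimes>\<^sub>M MA)" by measurable
  note S = stepA[OF f2m u2 Qm, unfolded Q_def]
  have S1: "AE \<omega> in M. integrable lamA (\<lambda>a. pol i (X i \<omega>) (H \<omega>) a * (u ((H \<omega>, X i \<omega>), a))\<^sup>2)"
    using S(1) by simp
  have Qi: "integrable M Q" unfolding Q_def using S(2) by simp
  have Qeq: "(\<integral>\<omega>. (u ((H \<omega>, X i \<omega>), A i \<omega>))\<^sup>2 \<partial>M) = (\<integral>\<omega>. Q \<omega> \<partial>M)" unfolding Q_def using S(3) by simp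
  have AEle: "AE \<omega> in M. (Cu \<omega>)\<^sup>2 \<le> Q \<omega>"
    using S1 C_one
  proof eventually_elim
    case (elim \<omega>)
    show ?case unfolding Cu_def Q_def
      by (rule jensen_w) (use elim pol_nn uint in auto)
  qed
  have Cu2: "integrable M (\<lambda>\<omega>. (Cu \<omega>)\<^sup>2)"
  proof (rule Bochner_Integration.integrable_bound[OF Qi])
    show "(\<lambda>\<omega>. (Cu \<omega>)\<^sup>2) \<in> borel_measurable M" by measurable
    show "AE \<omega> in M. norm ((Cu \<omega>)\<^sup>2) \<le> norm (Q \<omega>)" using AEle
    proof eventually_elim
      case (elim \<omega>)
      moreover have "0 \<le> (Cu \<omega>)\<^sup>2" by simp
      ultimately show ?case by simp
    qed
  qed
  then show "integrable M (\<lambda>\<omega>. (\<integral>a. pol i (X i \<omega>) (H \<omega>) a * u ((H \<omega>, X i \<omega>), a) \<partial>lamA)\<^sup>2)"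
    by (simp add: Cu_def)
  have "(\<integral>\<omega>. (Cu \<omega>)\<^sup>2 \<partial>M) \<le> (\<integral>\<omega>. Q \<omega> \<partial>M)"
    by (rule integral_mono_AE[OF Cu2 Qi AEle])
  then show "(\<integral>\<omega>. (\<integral>a. pol i (X i \<omega>) (H \<omega>) a * u ((H \<omega>, X i \<omega>), a) \<partial>lamA)\<^sup>2 \<partial>M)
         \<le> (\<integral>\<omega>. (u ((H \<omega>, X i \<omega>), A i \<omega>))\<^sup>2 \<partial>M)" unfolding Qeq Cu_def .
  fix \<psi> :: "_ \<Rightarrow> real"
  assume psim[measurable]: "\<psi> \<in> borel_measurable (HM i \<Otimes>\<^sub>M MX)" and psi2: "integrable M (\<lambda>\<omega>. (\<psi> (H \<omega>, X i \<omega>))\<^sup>2)"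
  have fm: "(\<lambda>z. \<psi> (fst z) * u z) \<in> borel_measurable ((HM i \<Otimes>\<^sub>M MX) \<Otimes>\<^sub>M MA)" by measurable
  have fi: "integrable M (\<lambda>\<omega>. \<psi> (fst ((H \<omega>, X i \<omega>), A i \<omega>)) * u ((H \<omega>, X i \<omega>), A i \<omega>))"
    using L2_mult[OF _ _ psi2 u2] by simp
  have Em: "(\<lambda>\<omega>. \<psi> (H \<omega>, X i \<omega>) * Cu \<omega>) \<in> borel_measurable M" by measurable
  have Eeq: "AE \<omega> in M. integrable lamA (\<lambda>a. pol i (X i \<omega>) (H \<omega>) a * \<psi> (fst ((H \<omega>, X i \<omega>), a)) * u ((H \<omega>, X i \<omega>), a)) \<longrightarrow>
      (\<integral>a. pol i (X i \<omega>) (H \<omega>) a * (\<psi> (fst ((H \<omega>, X i \<omega>), a)) * u ((H \<omega>, X i \<omega>), a)) \<partial>lamA) = \<psi> (H \<omega>, X i \<omega>) * Cu \<omega>"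
  proof (intro AE_I2 impI)
    fix \<omega>
    have "(\<lambda>a. pol i (X i \<omega>) (H \<omega>) a * (\<psi> (fst ((H \<omega>, X i \<omega>), a)) * u ((H \<omega>, X i \<omega>), a)))
        = (\<lambda>a. \<psi> (H \<omega>, X i \<omega>) * (pol i (X i \<omega>) (H \<omega>) a * u ((H \<omega>, X i \<omega>), a)))"
      by (simp add: algebra_simps)
    then show "(\<integral>a. pol i (X i \<omega>) (H \<omega>) a * (\<psi> (fst ((H \<omega>, X i \<omega>), a)) * u ((H \<omega>, X i \<omega>), a)) \<partial>lamA) = \<psi> (H \<omega>, X i \<omega>) * Cu \<omega>"
      by (simp add: Cu_def)
  qed
  have "(\<integral>\<omega>. \<psi> (fst ((H \<omega>, X i \<omega>), A i \<omega>)) * u ((H \<omega>, X i \<omega>), A i \<omega>) \<partial>M) = (\<integral>\<omega>. \<psi> (H \<omega>, X i \<omega>) * Cu \<omega> \<partial>M)"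
    by (rule stepA(3)[OF fm fi Em]) (use Eeq in \<open>simp add: mult.assoc\<close>)
  then show "(\<integral>\<omega>. \<psi> (H \<omega>, X i \<omega>) * u ((H \<omega>, X i \<omega>), A i \<omega>) \<partial>M)
        = (\<integral>\<omega>. \<psi> (H \<omega>, X i \<omega>) * (\<integral>a. pol i (X i \<omega>) (H \<omega>) a * u ((H \<omega>, X i \<omega>), a) \<partial>lamA) \<partial>M)"
    by (simp add: Cu_def)
qed

end

context thm6_i
begin

lemma Y2_int: "integrable M (\<lambda>\<omega>. (Y i \<omega>)\<^sup>2)"
proof -
  interpret prob_space M by (rule M_prob)
  show ?thesis
  proof (rule integrable_const_bound[where B="L\<^sup>2"])
    show "AE \<omega> in M. norm ((Y i \<omega>)\<^sup>2) \<le> L\<^sup>2" using Ybound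
    proof eventually_elim
      case (elim \<omega>)
      then have "\<bar>Y i \<omega>\<bar> \<le> \<bar>L\<bar>" using L_nn by simp
      then show ?case by (simp add: abs_le_square_iff)
    qed
  qed simp
qed

lemma bounded_sq_int:
  fixes f :: "_ \<Rightarrow> real"
  assumes [measurable]: "f \<in> borel_measurable M" and "\<And>\<omega>. \<bar>f \<omega>\<bar> \<le> K"
  shows "integrable M (\<lambda>\<omega>. (f \<omega>)\<^sup>2)"
proof -
  interpret prob_space M by (rule M_prob)
  show ?thesis
  proof (rule integrable_const_bound[where B="K\<^sup>2"])
    show "AE \<omega> in M. norm ((f \<omega>)\<^sup>2) \<le> K\<^sup>2"
    proof (intro AE_I2)
      fix \<omega>
      have "\<bar>f \<omega>\<bar> \<le> \<bar>K\<bar>" using assms(2)[of \<omega>] by simp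
      then show "norm ((f \<omega>)\<^sup>2) \<le> K\<^sup>2" by (simp add: abs_le_square_iff)
    qed
  qed simp
qed

lemma const_sq_int: "integrable M (\<lambda>\<omega>. (c::real)\<^sup>2)"
proof -
  interpret prob_space M by (rule M_prob)
  show ?thesis by simp
qed

lemma L2_L1: "f \<in> borel_measurable M \<Longrightarrow> integrable M (\<lambda>\<omega>. (f \<omega>)\<^sup>2) \<Longrightarrow> integrable M f" for f :: "_ \<Rightarrow> real"
proof -
  interpret prob_space M by (rule M_prob)
  show "f \<in> borel_measurable M \<Longrightarrow> integrable M (\<lambda>\<omega>. (f \<omega>)\<^sup>2) \<Longrightarrow> integrable M f"
    by (rule square_integrable_imp_integrable)
qed

lemma Yorth:
  fixes \<phi> :: "_ \<Rightarrow> real"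
  assumes phim[measurable]: "\<phi> \<in> borel_measurable (HM i \<Otimes>\<^sub>M MX \<Otimes>\<^sub>M MA)"
    and phii: "integrable M (\<lambda>\<omega>. \<phi> (H \<omega>, X i \<omega>, A i \<omega>))"
  shows "(\<integral>\<omega>. \<phi> (H \<omega>, X i \<omega>, A i \<omega>) * (Y i \<omega> - ms (X i \<omega>) (A i \<omega>)) \<partial>M) = 0"
proof -
  interpret prob_space M by (rule M_prob)
  have fm: "(\<lambda>z. \<phi> (fst z) * (snd z - ms (fst (snd (fst z))) (snd (snd (fst z))))) \<in> borel_measurable ((HM i \<Otimes>\<^sub>M MX \<Otimes>\<^sub>M MA) \<Otimes>\<^sub>M borel)"
    by measurable
  have fi: "integrable M (\<lambda>\<omega>. (\<lambda>z. \<phi> (fst z) * (snd z - ms (fst (snd (fst z))) (snd (snd (fst z))))) ((H \<omega>, X i \<omega>, A i \<omega>), Y i \<omega>))"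
  proof (rule Bochner_Integration.integrable_bound[OF integrable_mult_right[OF phii, of "2 * L"]])
    show "(\<lambda>\<omega>. (\<lambda>z. \<phi> (fst z) * (snd z - ms (fst (snd (fst z))) (snd (snd (fst z))))) ((H \<omega>, X i \<omega>, A i \<omega>), Y i \<omega>)) \<in> borel_measurable M"
      by measurable
    show "AE \<omega> in M. norm ((\<lambda>z. \<phi> (fst z) * (snd z - ms (fst (snd (fst z))) (snd (snd (fst z))))) ((H \<omega>, X i \<omega>, A i \<omega>), Y i \<omega>)) \<le> norm (2 * L * \<phi> (H \<omega>, X i \<omega>, A i \<omega>))"
      using Ybound
    proof eventually_elim
      case (elim \<omega>)
      have "\<bar>Y i \<omega> - ms (X i \<omega>) (A i \<omega>)\<bar> \<le> 2 * L" using elim ms_bound[of "X i \<omega>" "A i \<omega>"] by linarith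
      then have "\<bar>\<phi> (H \<omega>, X i \<omega>, A i \<omega>)\<bar> * \<bar>Y i \<omega> - ms (X i \<omega>) (A i \<omega>)\<bar> \<le> \<bar>\<phi> (H \<omega>, X i \<omega>, A i \<omega>)\<bar> * (2 * L)"
        by (intro mult_left_mono) auto
      then show ?case using L_nn by (simp add: abs_mult mult_ac)
    qed
  qed
  have "(\<integral>\<omega>. (\<lambda>z. \<phi> (fst z) * (snd z - ms (fst (snd (fst z))) (snd (snd (fst z))))) ((H \<omega>, X i \<omega>, A i \<omega>), Y i \<omega>) \<partial>M) = (\<integral>\<omega>. 0 \<partial>M)"
  proof (rule stepY(2)[OF fm fi])
    show "AE \<omega> in M. integrable (Gam (X i \<omega>) (A i \<omega>)) (\<lambda>y. (\<lambda>z. \<phi> (fst z) * (snd z - ms (fst (snd (fst z))) (snd (snd (fst z))))) ((H \<omega>, X i \<omega>, A i \<omega>), y)) \<longrightarrow>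
        (\<integral>y. (\<lambda>z. \<phi> (fst z) * (snd z - ms (fst (snd (fst z))) (snd (snd (fst z))))) ((H \<omega>, X i \<omega>, A i \<omega>), y) \<partial>Gam (X i \<omega>) (A i \<omega>)) = 0"
    proof (intro AE_I2 impI)
      fix \<omega>
      interpret G: prob_space "Gam (X i \<omega>) (A i \<omega>)" by (rule Gam_prob)
      have "(\<integral>y. y - ms (X i \<omega>) (A i \<omega>) \<partial>Gam (X i \<omega>) (A i \<omega>)) = 0"
        using Gam_int(1) G.prob_space by (simp add: mu_star_def)
      then show "(\<integral>y. (\<lambda>z. \<phi> (fst z) * (snd z - ms (fst (snd (fst z))) (snd (snd (fst z))))) ((H \<omega>, X i \<omega>, A i \<omega>), y) \<partial>Gam (X i \<omega>) (A i \<omega>)) = 0"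
        by simp
    qed
  qed simp
  then show ?thesis by simp
qed

lemma Ysec:
  fixes \<psi> :: "_ \<Rightarrow> real"
  assumes psim[measurable]: "\<psi> \<in> borel_measurable (HM i \<Otimes>\<^sub>M MX \<Otimes>\<^sub>M MA)"
    and psii: "integrable M (\<lambda>\<omega>. \<psi> (H \<omega>, X i \<omega>, A i \<omega>))"
  shows "(\<integral>\<omega>. \<psi> (H \<omega>, X i \<omega>, A i \<omega>) * (Y i \<omega> - ms (X i \<omega>) (A i \<omega>))\<^sup>2 \<partial>M)
       = (\<integral>\<omega>. \<psi> (H \<omega>, X i \<omega>, A i \<omega>) * sigma_sq Gam (X i \<omega>) (A i \<omega>) \<partial>M)"
proof -
  interpret prob_space M by (rule M_prob)
  have fm: "(\<lambda>z. \<psi> (fst z) * (snd z - ms (fst (snd (fst z))) (snd (snd (fst z))))\<^sup>2) \<in> borel_measurable ((HM i \<Otimes>\<^sub>M MX \<Otimes>\<^sub>M MA) \<Otimes>\<^sub>M borel)"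
    by measurable
  have fi: "integrable M (\<lambda>\<omega>. (\<lambda>z. \<psi> (fst z) * (snd z - ms (fst (snd (fst z))) (snd (snd (fst z))))\<^sup>2) ((H \<omega>, X i \<omega>, A i \<omega>), Y i \<omega>))"
  proof (rule Bochner_Integration.integrable_bound[OF integrable_mult_right[OF psii, of "(2 * L)\<^sup>2"]])
    show "(\<lambda>\<omega>. (\<lambda>z. \<psi> (fst z) * (snd z - ms (fst (snd (fst z))) (snd (snd (fst z))))\<^sup>2) ((H \<omega>, X i \<omega>, A i \<omega>), Y i \<omega>)) \<in> borel_measurable M"
      by measurable
    show "AE \<omega> in M. norm ((\<lambda>z. \<psi> (fst z) * (snd z - ms (fst (snd (fst z))) (snd (snd (fst z))))\<^sup>2) ((H \<omega>, X i \<omega>, A i \<omega>), Y i \<omega>)) \<le> norm ((2 * L)\<^sup>2 * \<psi> (H \<omega>, X i \<omega>, A i \<omega>))"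
      using Ybound
    proof eventually_elim
      case (elim \<omega>)
      have "(Y i \<omega> - ms (X i \<omega>) (A i \<omega>))\<^sup>2 \<le> (2 * L)\<^sup>2"
        by (rule sq_bound2) (use elim ms_bound in auto)
      then have "\<bar>\<psi> (H \<omega>, X i \<omega>, A i \<omega>)\<bar> * (Y i \<omega> - ms (X i \<omega>) (A i \<omega>))\<^sup>2 \<le> \<bar>\<psi> (H \<omega>, X i \<omega>, A i \<omega>)\<bar> * (2 * L)\<^sup>2"
        by (intro mult_left_mono) auto
      then show ?case by (simp add: abs_mult mult.commute)
    qed
  qed
  have Em: "(\<lambda>\<omega>. \<psi> (H \<omega>, X i \<omega>, A i \<omega>) * sigma_sq Gam (X i \<omega>) (A i \<omega>)) \<in> borel_measurable M" by measurable
  have "(\<integral>\<omega>. (\<lambda>z. \<psi> (fst z) * (snd z - ms (fst (snd (fst z))) (snd (snd (fst z))))\<^sup>2) ((H \<omega>, X i \<omega>, A i \<omega>), Y i \<omega>) \<partial>M)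
     = (\<integral>\<omega>. \<psi> (H \<omega>, X i \<omega>, A i \<omega>) * sigma_sq Gam (X i \<omega>) (A i \<omega>) \<partial>M)"
    by (rule stepY(2)[OF fm fi Em]) (simp add: sigma_sq_def)
  then show ?thesis by simp
qed

lemma Is2_int: "integrable M (\<lambda>\<omega>. (Is (X i \<omega>))\<^sup>2)"
proof -
  interpret prob_space M by (rule M_prob)
  have hm: "(\<lambda>z. ennreal ((Is (snd z))\<^sup>2)) \<in> borel_measurable (HM i \<Otimes>\<^sub>M MX)" by measurable
  have "(\<integral>\<^sup>+\<omega>. ennreal ((Is (X i \<omega>))\<^sup>2) \<partial>M) = (\<integral>\<^sup>+\<omega>. (\<integral>\<^sup>+x. ennreal ((Is x)\<^sup>2) \<partial>Xi) \<partial>M)"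
    using model_i(6)[OF i_lt hm] by simp
  also have "\<dots> = (\<integral>\<^sup>+x. ennreal ((Is x)\<^sup>2) \<partial>Xi)" by (simp add: emeasure_space_1)
  also have "\<dots> < \<infinity>" using fin_var by (simp add: integrable_iff_bounded)
  finally show ?thesis by (intro integrableI_nonneg) auto
qed

lemma tau_eq: "tau0 = (\<integral>x. Is x \<partial>Xi)"
  unfolding tau_def by simp

lemma Xorth:
  fixes Z :: "_ \<Rightarrow> real"
  assumes Zm[measurable]: "Z \<in> borel_measurable (HM i)"
    and Z2: "integrable M (\<lambda>\<omega>. (Z (H \<omega>))\<^sup>2)"
  shows "(\<integral>\<omega>. Z (H \<omega>) * (Is (X i \<omega>) - tau0) \<partial>M) = 0"
proof -
  interpret prob_space M by (rule M_prob)
  interpret Xp: prob_space Xi by (rule Xi_prob)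
  have fm: "(\<lambda>z. Z (fst z) * (Is (snd z) - tau0)) \<in> borel_measurable (HM i \<Otimes>\<^sub>M MX)" by measurable
  have c2: "integrable M (\<lambda>\<omega>. (Is (X i \<omega>) - tau0)\<^sup>2)"
    by (rule L2_diff[OF _ _ Is2_int const_sq_int]) auto
  have fi: "integrable M (\<lambda>\<omega>. (\<lambda>z. Z (fst z) * (Is (snd z) - tau0)) (H \<omega>, X i \<omega>))"
    using L2_mult[OF _ _ Z2 c2] by simp
  have "(\<integral>\<omega>. (\<lambda>z. Z (fst z) * (Is (snd z) - tau0)) (H \<omega>, X i \<omega>) \<partial>M) = (\<integral>\<omega>. 0 \<partial>M)"
  proof (rule stepX(2)[OF fm fi])
    show "AE \<omega> in M. integrable Xi (\<lambda>x. (\<lambda>z. Z (fst z) * (Is (snd z) - tau0)) (H \<omega>, x)) \<longrightarrow>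
        (\<integral>x. (\<lambda>z. Z (fst z) * (Is (snd z) - tau0)) (H \<omega>, x) \<partial>Xi) = 0"
    proof (intro AE_I2 impI)
      fix \<omega>
      have "(\<integral>x. Is x - tau0 \<partial>Xi) = 0"
        using Is_int Xp.prob_space by (simp add: tau_eq)
      then show "(\<integral>x. (\<lambda>z. Z (fst z) * (Is (snd z) - tau0)) (H \<omega>, x) \<partial>Xi) = 0" by simp
    qed
  qed simp
  then show ?thesis by simp
qed

lemma Xvar: "(\<integral>\<omega>. (Is (X i \<omega>) - tau0)\<^sup>2 \<partial>M) = (\<integral>x. (Is x - tau0)\<^sup>2 \<partial>Xi)"
proof -
  interpret prob_space M by (rule M_prob)
  have fm: "(\<lambda>z. (Is (snd z) - tau0)\<^sup>2) \<in> borel_measurable (HM i \<Otimes>\<^sub>M MX)" by measurable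
  have c2: "integrable M (\<lambda>\<omega>. (Is (X i \<omega>) - tau0)\<^sup>2)"
    by (rule L2_diff[OF _ _ Is2_int const_sq_int]) auto
  have "(\<integral>\<omega>. (\<lambda>z. (Is (snd z) - tau0)\<^sup>2) (H \<omega>, X i \<omega>) \<partial>M) = (\<integral>\<omega>. (\<integral>x. (Is x - tau0)\<^sup>2 \<partial>Xi) \<partial>M)"
    by (rule stepX(2)[OF fm]) (use c2 in simp_all)
  then show ?thesis using prob_space by simp
qed

end

context thm6_i
begin

abbreviation "Wv \<omega> \<equiv> g (X i \<omega>) (A i \<omega>) / pol i (X i \<omega>) (H \<omega>) (A i \<omega>)"
abbreviation "Mhv \<omega> \<equiv> muhat i (H \<omega>) (X i \<omega>) (A i \<omega>)"
abbreviation "MSv \<omega> \<equiv> ms (X i \<omega>) (A i \<omega>)"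
abbreviation "Jv \<omega> \<equiv> Is (X i \<omega>) - Ih (H \<omega>) (X i \<omega>)"
abbreviation "uv \<omega> \<equiv> Wv \<omega> * (MSv \<omega> - Mhv \<omega>)"
abbreviation "av \<omega> \<equiv> Wv \<omega> * (Y i \<omega> - MSv \<omega>)"
abbreviation "cv \<omega> \<equiv> Is (X i \<omega>) - tau0"
abbreviation "Dv \<omega> \<equiv> Wv \<omega> * (Y i \<omega> - Mhv \<omega>) + Ih (H \<omega>) (X i \<omega>) - tau0"

definition ufn where "ufn z = g (snd (fst z)) (snd z) / pol i (snd (fst z)) (fst (fst z)) (snd z)
   * (ms (snd (fst z)) (snd z) - muhat i (fst (fst z)) (snd (fst z)) (snd z))"

lemma ufn_meas[measurable]: "ufn \<in> borel_measurable ((HM i \<Otimes>\<^sub>M MX) \<Otimes>\<^sub>M MA)"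
  unfolding ufn_def by measurable

lemma ov: "AE \<omega> in M. \<bar>Wv \<omega>\<bar> \<le> B"
  using overlap i_lt by auto

lemma ov2: "AE \<omega> in M. (Wv \<omega>)\<^sup>2 \<le> B\<^sup>2"
  using ov
proof eventually_elim
  case (elim \<omega>)
  then have "\<bar>Wv \<omega>\<bar> \<le> \<bar>B\<bar>" by simp
  then show ?case by (simp only: abs_le_square_iff)
qed

lemma W2_int: "integrable M (\<lambda>\<omega>. (Wv \<omega>)\<^sup>2)"
proof -
  interpret prob_space M by (rule M_prob)
  show ?thesis
    by (rule integrable_const_bound[where B="B\<^sup>2"]) (use ov2 in \<open>auto elim!: eventually_mono\<close>)
qed

lemma Yd2_int: "integrable M (\<lambda>\<omega>. (Y i \<omega> - Mhv \<omega>)\<^sup>2)"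
  using sq_int[OF i_lt] by simp

lemma Mh2_int: "integrable M (\<lambda>\<omega>. (Mhv \<omega>)\<^sup>2)"
  using L2_diff[OF _ _ Y2_int Yd2_int] by simp

lemma MS2_int: "integrable M (\<lambda>\<omega>. (MSv \<omega>)\<^sup>2)"
  by (rule bounded_sq_int[where K=L]) (auto intro: ms_bound)

lemma d2_int: "integrable M (\<lambda>\<omega>. (MSv \<omega> - Mhv \<omega>)\<^sup>2)"
  by (rule L2_diff[OF _ _ MS2_int Mh2_int]) auto

lemma u2_int: "integrable M (\<lambda>\<omega>. (uv \<omega>)\<^sup>2)"
proof (rule Bochner_Integration.integrable_bound[OF integrable_mult_right[OF d2_int, of "B\<^sup>2"]])
  show "(\<lambda>\<omega>. (uv \<omega>)\<^sup>2) \<in> borel_measurable M" by measurable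
  show "AE \<omega> in M. norm ((uv \<omega>)\<^sup>2) \<le> norm (B\<^sup>2 * (MSv \<omega> - Mhv \<omega>)\<^sup>2)"
    using ov2
  proof eventually_elim
    case (elim \<omega>)
    have "norm ((uv \<omega>)\<^sup>2) = (Wv \<omega>)\<^sup>2 * (MSv \<omega> - Mhv \<omega>)\<^sup>2"
      by (simp only: power_mult_distrib real_norm_def, rule abs_of_nonneg, simp)
    also have "\<dots> \<le> B\<^sup>2 * (MSv \<omega> - Mhv \<omega>)\<^sup>2"
      using elim by (intro mult_right_mono) auto
    also have "\<dots> \<le> norm (B\<^sup>2 * (MSv \<omega> - Mhv \<omega>)\<^sup>2)"
      by simp
    finally show ?case .
  qed
qed

lemma a2_int: "integrable M (\<lambda>\<omega>. (av \<omega>)\<^sup>2)"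
proof -
  interpret prob_space M by (rule M_prob)
  show ?thesis
  proof (rule integrable_const_bound[where B="B\<^sup>2 * (2 * L)\<^sup>2"])
    show "AE \<omega> in M. norm ((av \<omega>)\<^sup>2) \<le> B\<^sup>2 * (2 * L)\<^sup>2"
      using ov2 Ybound
    proof eventually_elim
      case (elim \<omega>)
      have "(Y i \<omega> - MSv \<omega>)\<^sup>2 \<le> (2 * L)\<^sup>2" by (rule sq_bound2) (use elim ms_bound in auto)
      then have le: "(Wv \<omega>)\<^sup>2 * (Y i \<omega> - MSv \<omega>)\<^sup>2 \<le> B\<^sup>2 * (2 * L)\<^sup>2"
        using elim by (intro mult_mono) auto
      have "norm ((av \<omega>)\<^sup>2) = (Wv \<omega>)\<^sup>2 * (Y i \<omega> - MSv \<omega>)\<^sup>2"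
        by (simp only: power_mult_distrib real_norm_def, rule abs_of_nonneg, simp)
      then show ?case using le by (simp only:)
    qed
  qed simp
qed

lemma c2_int: "integrable M (\<lambda>\<omega>. (cv \<omega>)\<^sup>2)"
  by (rule L2_diff[OF _ _ Is2_int const_sq_int]) auto

lemma pol_u: "pol i x hh a * (g x a / pol i x hh a * t) = g x a * t"
proof (cases "g x a = 0")
  case False
  then have "0 < pol i x hh a" using coverage i_lt by auto
  then show ?thesis by simp
qed simp

lemma ufn_int: "integrable lamA (\<lambda>a. pol i x hh a * ufn ((hh, x), a))"
proof -
  have "(\<lambda>a. pol i x hh a * ufn ((hh, x), a)) = (\<lambda>a. g x a * ms x a - g x a * muhat i hh x a)"
    by (rule ext) (simp only: ufn_def fst_conv snd_conv pol_u right_diff_distrib)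
  then show ?thesis using fin_inner_star fin_inner_hat i_lt by simp
qed

lemma Cu_eq: "(\<integral>a. pol i x hh a * ufn ((hh, x), a) \<partial>lamA) = Is x - Ih hh x"
proof -
  have "(\<lambda>a. pol i x hh a * ufn ((hh, x), a)) = (\<lambda>a. g x a * ms x a - g x a * muhat i hh x a)"
    by (rule ext) (simp only: ufn_def fst_conv snd_conv pol_u right_diff_distrib)
  then show ?thesis using fin_inner_star fin_inner_hat i_lt by (simp add: innerA_def)
qed

lemma ufn_u2: "integrable M (\<lambda>\<omega>. (ufn ((H \<omega>, X i \<omega>), A i \<omega>))\<^sup>2)"
  using u2_int by (simp add: ufn_def)

lemmas cond = condA[OF ufn_meas ufn_u2 ufn_int, unfolded Cu_eq]

lemma J2_int: "integrable M (\<lambda>\<omega>. (Jv \<omega>)\<^sup>2)"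
  by (rule cond(2))

lemma J_meas[measurable]: "(\<lambda>\<omega>. Jv \<omega>) \<in> borel_measurable M"
  by measurable

lemma cond_psi:
  assumes "\<psi> \<in> borel_measurable (HM i \<Otimes>\<^sub>M MX)" "integrable M (\<lambda>\<omega>. (\<psi> (H \<omega>, X i \<omega>))\<^sup>2)"
  shows "(\<integral>\<omega>. \<psi> (H \<omega>, X i \<omega>) * uv \<omega> \<partial>M) = (\<integral>\<omega>. \<psi> (H \<omega>, X i \<omega>) * Jv \<omega> \<partial>M)"
  using cond(4)[OF assms] by (simp add: ufn_def)

lemma sq_split: "(y - v)\<^sup>2 = (y - m)\<^sup>2 + 2 * ((m - v) * (y - m)) + (m - v)\<^sup>2" for y v m :: real
  by (simp add: power2_eq_square algebra_simps)

lemma Ydecomp: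
  fixes \<nu> :: "_ \<Rightarrow> real"
  assumes num[measurable]: "\<nu> \<in> borel_measurable (HM i \<Otimes>\<^sub>M MX \<Otimes>\<^sub>M MA)"
    and nu2: "integrable M (\<lambda>\<omega>. (\<nu> (H \<omega>, X i \<omega>, A i \<omega>))\<^sup>2)"
  shows "(\<integral>\<omega>. (Y i \<omega> - \<nu> (H \<omega>, X i \<omega>, A i \<omega>))\<^sup>2 \<partial>M)
       = (\<integral>\<omega>. sigma_sq Gam (X i \<omega>) (A i \<omega>) \<partial>M) + (\<integral>\<omega>. (MSv \<omega> - \<nu> (H \<omega>, X i \<omega>, A i \<omega>))\<^sup>2 \<partial>M)"
proof -
  interpret prob_space M by (rule M_prob)
  have e2: "integrable M (\<lambda>\<omega>. (Y i \<omega> - MSv \<omega>)\<^sup>2)"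
    by (rule L2_diff[OF _ _ Y2_int MS2_int]) auto
  have dn2: "integrable M (\<lambda>\<omega>. (MSv \<omega> - \<nu> (H \<omega>, X i \<omega>, A i \<omega>))\<^sup>2)"
    by (rule L2_diff[OF _ _ MS2_int nu2]) auto
  have dn1: "integrable M (\<lambda>\<omega>. MSv \<omega> - \<nu> (H \<omega>, X i \<omega>, A i \<omega>))"
    by (rule L2_L1[OF _ dn2]) measurable
  have pr: "integrable M (\<lambda>\<omega>. (MSv \<omega> - \<nu> (H \<omega>, X i \<omega>, A i \<omega>)) * (Y i \<omega> - MSv \<omega>))"
    by (rule L2_mult[OF _ _ dn2 e2]) auto
  have phim: "(\<lambda>z. ms (fst (snd z)) (snd (snd z)) - \<nu> z) \<in> borel_measurable (HM i \<Otimes>\<^sub>M MX \<Otimes>\<^sub>M MA)"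
    by measurable
  have dn1': "integrable M (\<lambda>\<omega>. (\<lambda>z. ms (fst (snd z)) (snd (snd z)) - \<nu> z) (H \<omega>, X i \<omega>, A i \<omega>))"
    using dn1 by (simp only: fst_conv snd_conv)
  have o: "(\<integral>\<omega>. (MSv \<omega> - \<nu> (H \<omega>, X i \<omega>, A i \<omega>)) * (Y i \<omega> - MSv \<omega>) \<partial>M) = 0"
    using Yorth[OF phim dn1'] by (simp only: fst_conv snd_conv)
  have onem: "(\<lambda>z. 1::real) \<in> borel_measurable (HM i \<Otimes>\<^sub>M MX \<Otimes>\<^sub>M MA)" by simp
  have onei: "integrable M (\<lambda>\<omega>. (\<lambda>z. 1::real) (H \<omega>, X i \<omega>, A i \<omega>))" by simp
  have s: "(\<integral>\<omega>. (Y i \<omega> - MSv \<omega>)\<^sup>2 \<partial>M) = (\<integral>\<omega>. sigma_sq Gam (X i \<omega>) (A i \<omega>) \<partial>M)"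
    using Ysec[OF onem onei] by (simp only: mult_1)
  have "(\<integral>\<omega>. (Y i \<omega> - \<nu> (H \<omega>, X i \<omega>, A i \<omega>))\<^sup>2 \<partial>M)
      = (\<integral>\<omega>. (Y i \<omega> - MSv \<omega>)\<^sup>2 + 2 * ((MSv \<omega> - \<nu> (H \<omega>, X i \<omega>, A i \<omega>)) * (Y i \<omega> - MSv \<omega>)) + (MSv \<omega> - \<nu> (H \<omega>, X i \<omega>, A i \<omega>))\<^sup>2 \<partial>M)"
    by (rule Bochner_Integration.integral_cong[OF refl sq_split])
  also have "\<dots> = (\<integral>\<omega>. (Y i \<omega> - MSv \<omega>)\<^sup>2 + 2 * ((MSv \<omega> - \<nu> (H \<omega>, X i \<omega>, A i \<omega>)) * (Y i \<omega> - MSv \<omega>)) \<partial>M) + (\<integral>\<omega>. (MSv \<omega> - \<nu> (H \<omega>, X i \<omega>, A i \<omega>))\<^sup>2 \<partial>M)"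
    by (intro Bochner_Integration.integral_add Bochner_Integration.integrable_add integrable_mult_right e2 pr dn2)
  also have "(\<integral>\<omega>. (Y i \<omega> - MSv \<omega>)\<^sup>2 + 2 * ((MSv \<omega> - \<nu> (H \<omega>, X i \<omega>, A i \<omega>)) * (Y i \<omega> - MSv \<omega>)) \<partial>M)
      = (\<integral>\<omega>. (Y i \<omega> - MSv \<omega>)\<^sup>2 \<partial>M) + (\<integral>\<omega>. 2 * ((MSv \<omega> - \<nu> (H \<omega>, X i \<omega>, A i \<omega>)) * (Y i \<omega> - MSv \<omega>)) \<partial>M)"
    by (intro Bochner_Integration.integral_add integrable_mult_right e2 pr)
  also have "(\<integral>\<omega>. 2 * ((MSv \<omega> - \<nu> (H \<omega>, X i \<omega>, A i \<omega>)) * (Y i \<omega> - MSv \<omega>)) \<partial>M) = 0"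
    using o by (simp only: integral_mult_right_zero mult_zero_right)
  finally show ?thesis using s by (simp only: add_0_right)
qed

end

lemma expand7: "(a + (u - J) + c)\<^sup>2 = a\<^sup>2 + u\<^sup>2 + c\<^sup>2 - J\<^sup>2 + 2 * (a * ((u - J) + c)) + 2 * (c * u - c * J) + 2 * (J * J - J * u)"
  for a u J c :: real
  by (simp add: power2_eq_square algebra_simps)

lemma D_split_gen: "w * (y - m) + ih - t = w * (y - s) + (w * (s - m) - (is - ih)) + (is - t)" for w y m ih t s "is" :: real
  by (simp add: algebra_simps)

lemma lin7:
  fixes f1 f2 f3 f4 f5 f6 f7 :: "_ \<Rightarrow> real"
  assumes "integrable M f1" "integrable M f2" "integrable M f3" "integrable M f4"
    "integrable M f5" "integrable M f6" "integrable M f7"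
  shows "(\<integral>x. f1 x + f2 x + f3 x - f4 x + 2 * f5 x + 2 * f6 x + 2 * f7 x \<partial>M)
    = (\<integral>x. f1 x \<partial>M) + (\<integral>x. f2 x \<partial>M) + (\<integral>x. f3 x \<partial>M) - (\<integral>x. f4 x \<partial>M)
      + 2 * (\<integral>x. f5 x \<partial>M) + 2 * (\<integral>x. f6 x \<partial>M) + 2 * (\<integral>x. f7 x \<partial>M)"
  using assms by simp

context thm6_i
begin

lemma D_split: "Dv \<omega> = av \<omega> + (uv \<omega> - Jv \<omega>) + cv \<omega>"
  by (rule D_split_gen)

lemma uJ2_int: "integrable M (\<lambda>\<omega>. (uv \<omega> - Jv \<omega>)\<^sup>2)"
  by (rule L2_diff[OF _ _ u2_int J2_int]) auto

lemma bc2_int: "integrable M (\<lambda>\<omega>. ((uv \<omega> - Jv \<omega>) + cv \<omega>)\<^sup>2)"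
  by (rule L2_add[OF _ _ uJ2_int c2_int]) auto

lemma D2_int: "integrable M (\<lambda>\<omega>. (Dv \<omega>)\<^sup>2)"
proof -
  have "integrable M (\<lambda>\<omega>. (av \<omega> + ((uv \<omega> - Jv \<omega>) + cv \<omega>))\<^sup>2)"
    by (rule L2_add[OF _ _ a2_int bc2_int]) auto
  then show ?thesis by (simp only: D_split add.assoc)
qed

lemma D_meas[measurable]: "(\<lambda>\<omega>. Dv \<omega>) \<in> borel_measurable M" by measurable

lemma W_abs_mult_int:
  fixes f :: "_ \<Rightarrow> real"
  assumes [measurable]: "f \<in> borel_measurable M" and f2: "integrable M (\<lambda>\<omega>. (f \<omega>)\<^sup>2)"
  shows "integrable M (\<lambda>\<omega>. Wv \<omega> * f \<omega>)"
proof (rule Bochner_Integration.integrable_bound[OF integrable_mult_right[OF L2_L1[OF _ f2], of B]])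
  show "(\<lambda>\<omega>. Wv \<omega> * f \<omega>) \<in> borel_measurable M" by measurable
  show "AE \<omega> in M. norm (Wv \<omega> * f \<omega>) \<le> norm (B * f \<omega>)"
    using ov
  proof eventually_elim
    case (elim \<omega>)
    then have "\<bar>Wv \<omega>\<bar> * \<bar>f \<omega>\<bar> \<le> B * \<bar>f \<omega>\<bar>" by (intro mult_right_mono) auto
    then show ?case using B_pos by (simp add: abs_mult)
  qed
qed simp

lemma ab_zero: "(\<integral>\<omega>. av \<omega> * ((uv \<omega> - Jv \<omega>) + cv \<omega>) \<partial>M) = 0"
proof -
  define \<phi> where "\<phi> = (\<lambda>z. g (fst (snd z)) (snd (snd z)) / pol i (fst (snd z)) (fst z) (snd (snd z)) *
     ((g (fst (snd z)) (snd (snd z)) / pol i (fst (snd z)) (fst z) (snd (snd z)) *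
        (ms (fst (snd z)) (snd (snd z)) - muhat i (fst z) (fst (snd z)) (snd (snd z)))
      - (Is (fst (snd z)) - Ih (fst z) (fst (snd z)))) + (Is (fst (snd z)) - tau0)))"
  have phim: "\<phi> \<in> borel_measurable (HM i \<Otimes>\<^sub>M MX \<Otimes>\<^sub>M MA)" unfolding \<phi>_def by measurable
  have pe: "\<phi> (H \<omega>, X i \<omega>, A i \<omega>) = Wv \<omega> * ((uv \<omega> - Jv \<omega>) + cv \<omega>)" for \<omega>
    unfolding \<phi>_def by (simp only: fst_conv snd_conv)
  have "integrable M (\<lambda>\<omega>. Wv \<omega> * ((uv \<omega> - Jv \<omega>) + cv \<omega>))"
    by (rule W_abs_mult_int[OF _ bc2_int]) measurable
  then have phii: "integrable M (\<lambda>\<omega>. \<phi> (H \<omega>, X i \<omega>, A i \<omega>))" by (simp only: pe)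
  have "(\<integral>\<omega>. \<phi> (H \<omega>, X i \<omega>, A i \<omega>) * (Y i \<omega> - MSv \<omega>) \<partial>M) = 0" by (rule Yorth[OF phim phii])
  moreover have "\<phi> (H \<omega>, X i \<omega>, A i \<omega>) * (Y i \<omega> - MSv \<omega>) = av \<omega> * ((uv \<omega> - Jv \<omega>) + cv \<omega>)" for \<omega>
    unfolding pe by (simp only: mult_ac)
  ultimately show ?thesis by simp
qed

lemma cJ_zero: "(\<integral>\<omega>. cv \<omega> * uv \<omega> - cv \<omega> * Jv \<omega> \<partial>M) = 0"
proof -
  have psim: "(\<lambda>u. Is (snd u) - tau0) \<in> borel_measurable (HM i \<Otimes>\<^sub>M MX)" by measurable
  have psi2: "integrable M (\<lambda>\<omega>. ((\<lambda>u. Is (snd u) - tau0) (H \<omega>, X i \<omega>))\<^sup>2)" using c2_int by simp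
  have e: "(\<integral>\<omega>. cv \<omega> * uv \<omega> \<partial>M) = (\<integral>\<omega>. cv \<omega> * Jv \<omega> \<partial>M)"
    using cond_psi[OF psim psi2] by (simp only: fst_conv snd_conv)
  have i1: "integrable M (\<lambda>\<omega>. cv \<omega> * uv \<omega>)" by (rule L2_mult[OF _ _ c2_int u2_int]) auto
  have i2: "integrable M (\<lambda>\<omega>. cv \<omega> * Jv \<omega>)" by (rule L2_mult[OF _ _ c2_int J2_int]) auto
  show ?thesis using e i1 i2 by simp
qed

lemma JJ_zero: "(\<integral>\<omega>. Jv \<omega> * Jv \<omega> - Jv \<omega> * uv \<omega> \<partial>M) = 0"
proof -
  have psim: "(\<lambda>u. Is (snd u) - Ih (fst u) (snd u)) \<in> borel_measurable (HM i \<Otimes>\<^sub>M MX)" by measurable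
  have psi2: "integrable M (\<lambda>\<omega>. ((\<lambda>u. Is (snd u) - Ih (fst u) (snd u)) (H \<omega>, X i \<omega>))\<^sup>2)" using J2_int by simp
  have e: "(\<integral>\<omega>. Jv \<omega> * uv \<omega> \<partial>M) = (\<integral>\<omega>. Jv \<omega> * Jv \<omega> \<partial>M)"
    using cond_psi[OF psim psi2] by (simp only: fst_conv snd_conv)
  have i1: "integrable M (\<lambda>\<omega>. Jv \<omega> * uv \<omega>)" by (rule L2_mult[OF _ _ J2_int u2_int]) auto
  have i2: "integrable M (\<lambda>\<omega>. Jv \<omega> * Jv \<omega>)" by (rule L2_mult[OF _ _ J2_int J2_int]) auto
  show ?thesis using e i1 i2 by simp
qed

lemma D2_eq: "(\<integral>\<omega>. (Dv \<omega>)\<^sup>2 \<partial>M) = (\<integral>\<omega>. (av \<omega>)\<^sup>2 \<partial>M) + (\<integral>\<omega>. (uv \<omega>)\<^sup>2 \<partial>M) + (\<integral>\<omega>. (cv \<omega>)\<^sup>2 \<partial>M) - (\<integral>\<omega>. (Jv \<omega>)\<^sup>2 \<partial>M)"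
proof -
  have i5: "integrable M (\<lambda>\<omega>. av \<omega> * ((uv \<omega> - Jv \<omega>) + cv \<omega>))"
    by (rule L2_mult[OF _ _ a2_int bc2_int]) auto
  have i6: "integrable M (\<lambda>\<omega>. cv \<omega> * uv \<omega> - cv \<omega> * Jv \<omega>)"
    using L2_mult[OF _ _ c2_int u2_int] L2_mult[OF _ _ c2_int J2_int] by simp
  have i7: "integrable M (\<lambda>\<omega>. Jv \<omega> * Jv \<omega> - Jv \<omega> * uv \<omega>)"
    using L2_mult[OF _ _ J2_int J2_int] L2_mult[OF _ _ J2_int u2_int] by simp
  have "(\<integral>\<omega>. (Dv \<omega>)\<^sup>2 \<partial>M) = (\<integral>\<omega>. (av \<omega>)\<^sup>2 + (uv \<omega>)\<^sup>2 + (cv \<omega>)\<^sup>2 - (Jv \<omega>)\<^sup>2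
      + 2 * (av \<omega> * ((uv \<omega> - Jv \<omega>) + cv \<omega>)) + 2 * (cv \<omega> * uv \<omega> - cv \<omega> * Jv \<omega>)
      + 2 * (Jv \<omega> * Jv \<omega> - Jv \<omega> * uv \<omega>) \<partial>M)"
    by (rule Bochner_Integration.integral_cong[OF refl]) (simp only: D_split expand7)
  also have "\<dots> = (\<integral>\<omega>. (av \<omega>)\<^sup>2 \<partial>M) + (\<integral>\<omega>. (uv \<omega>)\<^sup>2 \<partial>M) + (\<integral>\<omega>. (cv \<omega>)\<^sup>2 \<partial>M) - (\<integral>\<omega>. (Jv \<omega>)\<^sup>2 \<partial>M)
      + 2 * (\<integral>\<omega>. av \<omega> * ((uv \<omega> - Jv \<omega>) + cv \<omega>) \<partial>M) + 2 * (\<integral>\<omega>. cv \<omega> * uv \<omega> - cv \<omega> * Jv \<omega> \<partial>M)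
      + 2 * (\<integral>\<omega>. Jv \<omega> * Jv \<omega> - Jv \<omega> * uv \<omega> \<partial>M)"
    by (rule lin7[OF a2_int u2_int c2_int J2_int i5 i6 i7])
  finally show ?thesis by (simp only: ab_zero cJ_zero JJ_zero mult_zero_right add_0_right)
qed

lemma D2_bound: "(\<integral>\<omega>. (Dv \<omega>)\<^sup>2 \<partial>M) \<le> (\<integral>x. (Is x - tau0)\<^sup>2 \<partial>Xi)
   + (\<integral>\<omega>. (Wv \<omega>)\<^sup>2 * sigma_sq Gam (X i \<omega>) (A i \<omega>) \<partial>M) + B\<^sup>2 * (\<integral>\<omega>. (MSv \<omega> - Mhv \<omega>)\<^sup>2 \<partial>M)"
proof -
  have psim: "(\<lambda>z. (g (fst (snd z)) (snd (snd z)) / pol i (fst (snd z)) (fst z) (snd (snd z)))\<^sup>2) \<in> borel_measurable (HM i \<Otimes>\<^sub>M MX \<Otimes>\<^sub>M MA)"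
    by measurable
  have psii: "integrable M (\<lambda>\<omega>. (\<lambda>z. (g (fst (snd z)) (snd (snd z)) / pol i (fst (snd z)) (fst z) (snd (snd z)))\<^sup>2) (H \<omega>, X i \<omega>, A i \<omega>))"
    using W2_int by (simp only: fst_conv snd_conv)
  have a2: "(\<integral>\<omega>. (av \<omega>)\<^sup>2 \<partial>M) = (\<integral>\<omega>. (Wv \<omega>)\<^sup>2 * sigma_sq Gam (X i \<omega>) (A i \<omega>) \<partial>M)"
    using Ysec[OF psim psii] by (simp only: fst_conv snd_conv power_mult_distrib)
  have u2: "(\<integral>\<omega>. (uv \<omega>)\<^sup>2 \<partial>M) \<le> (\<integral>\<omega>. B\<^sup>2 * (MSv \<omega> - Mhv \<omega>)\<^sup>2 \<partial>M)"
  proof (rule integral_mono_AE[OF u2_int integrable_mult_right[OF d2_int]])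
    show "AE \<omega> in M. (uv \<omega>)\<^sup>2 \<le> B\<^sup>2 * (MSv \<omega> - Mhv \<omega>)\<^sup>2"
      using ov2
    proof eventually_elim
      case (elim \<omega>)
      have "(uv \<omega>)\<^sup>2 = (Wv \<omega>)\<^sup>2 * (MSv \<omega> - Mhv \<omega>)\<^sup>2" by (simp only: power_mult_distrib)
      also have "\<dots> \<le> B\<^sup>2 * (MSv \<omega> - Mhv \<omega>)\<^sup>2" using elim by (intro mult_right_mono) auto
      finally show ?case .
    qed
  qed
  have J2: "0 \<le> (\<integral>\<omega>. (Jv \<omega>)\<^sup>2 \<partial>M)" by simp
  have u2': "(\<integral>\<omega>. (uv \<omega>)\<^sup>2 \<partial>M) \<le> B\<^sup>2 * (\<integral>\<omega>. (MSv \<omega> - Mhv \<omega>)\<^sup>2 \<partial>M)"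
    using u2 by (simp only: integral_mult_right_zero)
  show ?thesis using D2_eq a2 u2' J2 Xvar by linarith
qed

lemma D_orth:
  fixes Z :: "_ \<Rightarrow> real"
  assumes Zm[measurable]: "Z \<in> borel_measurable (HM i)"
    and Z2: "integrable M (\<lambda>\<omega>. (Z (H \<omega>))\<^sup>2)"
  shows "integrable M (\<lambda>\<omega>. Z (H \<omega>) * Dv \<omega>)" "(\<integral>\<omega>. Z (H \<omega>) * Dv \<omega> \<partial>M) = 0"
proof -
  show "integrable M (\<lambda>\<omega>. Z (H \<omega>) * Dv \<omega>)" by (rule L2_mult[OF _ _ Z2 D2_int]) auto
  have ia: "integrable M (\<lambda>\<omega>. Z (H \<omega>) * av \<omega>)" by (rule L2_mult[OF _ _ Z2 a2_int]) auto
  have iu: "integrable M (\<lambda>\<omega>. Z (H \<omega>) * uv \<omega>)" by (rule L2_mult[OF _ _ Z2 u2_int]) auto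
  have iJ: "integrable M (\<lambda>\<omega>. Z (H \<omega>) * Jv \<omega>)" by (rule L2_mult[OF _ _ Z2 J2_int]) auto
  have ic: "integrable M (\<lambda>\<omega>. Z (H \<omega>) * cv \<omega>)" by (rule L2_mult[OF _ _ Z2 c2_int]) auto
  have phim: "(\<lambda>z. Z (fst z) * (g (fst (snd z)) (snd (snd z)) / pol i (fst (snd z)) (fst z) (snd (snd z)))) \<in> borel_measurable (HM i \<Otimes>\<^sub>M MX \<Otimes>\<^sub>M MA)"
    by measurable
  have "integrable M (\<lambda>\<omega>. Wv \<omega> * Z (H \<omega>))"
    by (rule W_abs_mult_int[OF _ Z2]) measurable
  then have phii: "integrable M (\<lambda>\<omega>. (\<lambda>z. Z (fst z) * (g (fst (snd z)) (snd (snd z)) / pol i (fst (snd z)) (fst z) (snd (snd z)))) (H \<omega>, X i \<omega>, A i \<omega>))"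
    by (simp only: fst_conv snd_conv mult.commute)
  have za: "(\<integral>\<omega>. Z (H \<omega>) * av \<omega> \<partial>M) = 0"
    using Yorth[OF phim phii] by (simp only: fst_conv snd_conv mult.assoc)
  have psim: "(\<lambda>u. Z (fst u)) \<in> borel_measurable (HM i \<Otimes>\<^sub>M MX)" by measurable
  have psi2: "integrable M (\<lambda>\<omega>. ((\<lambda>u. Z (fst u)) (H \<omega>, X i \<omega>))\<^sup>2)" using Z2 by simp
  have zu: "(\<integral>\<omega>. Z (H \<omega>) * uv \<omega> \<partial>M) = (\<integral>\<omega>. Z (H \<omega>) * Jv \<omega> \<partial>M)"
    using cond_psi[OF psim psi2] by (simp only: fst_conv)
  have zc: "(\<integral>\<omega>. Z (H \<omega>) * cv \<omega> \<partial>M) = 0" by (rule Xorth[OF Zm Z2])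
  have "(\<integral>\<omega>. Z (H \<omega>) * Dv \<omega> \<partial>M) = (\<integral>\<omega>. Z (H \<omega>) * av \<omega> + (Z (H \<omega>) * uv \<omega> - Z (H \<omega>) * Jv \<omega>) + Z (H \<omega>) * cv \<omega> \<partial>M)"
    by (rule Bochner_Integration.integral_cong[OF refl]) (simp only: D_split distrib_left right_diff_distrib)
  also have "\<dots> = (\<integral>\<omega>. Z (H \<omega>) * av \<omega> \<partial>M) + ((\<integral>\<omega>. Z (H \<omega>) * uv \<omega> \<partial>M) - (\<integral>\<omega>. Z (H \<omega>) * Jv \<omega> \<partial>M)) + (\<integral>\<omega>. Z (H \<omega>) * cv \<omega> \<partial>M)"
    using ia iu iJ ic by simp
  finally show "(\<integral>\<omega>. Z (H \<omega>) * Dv \<omega> \<partial>M) = 0" using za zu zc by simp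
qed

end

context thm6
begin

definition Dfun where "Dfun j h x a y = g x a / pol j x h a * (y - muhat j h x a) + innerA lamA (g x) (muhat j h x) - tau0"
definition Zf where "Zf k h = (\<Sum>j<k. Dfun j (restrict h {..<j}) (fst (h j)) (fst (snd (h j))) (snd (snd (h j))))"
definition Sv where "Sv k \<omega> = (\<Sum>j<k. Dfun j (hist X A Y j \<omega>) (X j \<omega>) (A j \<omega>) (Y j \<omega>))"

lemma hist_restrict: "j \<le> k \<Longrightarrow> restrict (hist X A Y k \<omega>) {..<j} = hist X A Y j \<omega>"
  unfolding hist_def by (auto simp: restrict_def fun_eq_iff)

lemma hist_at: "j < k \<Longrightarrow> hist X A Y k \<omega> j = (X j \<omega>, A j \<omega>, Y j \<omega>)"
  unfolding hist_def by simp

lemma Sv_Zf: "Sv k \<omega> = Zf k (hist X A Y k \<omega>)"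
  unfolding Sv_def Zf_def by (rule sum.cong) (auto simp: hist_restrict hist_at)

lemma Dfun_meas: "j < n \<Longrightarrow> (\<lambda>z. Dfun j (fst z) (fst (snd z)) (fst (snd (snd z))) (snd (snd (snd z)))) \<in> borel_measurable (HM j \<Otimes>\<^sub>M MX \<Otimes>\<^sub>M MA \<Otimes>\<^sub>M borel)"
proof -
  assume j: "j < n"
  interpret T: thm6_i M MX MA lamA Xi Gam pol X A Y g muhat F n L B j by (rule thm6_i_at[OF j])
  show ?thesis unfolding Dfun_def by measurable
qed

lemma Zf_meas: "k \<le> n \<Longrightarrow> Zf k \<in> borel_measurable (HM k)"
proof -
  assume k: "k \<le> n"
  have "(\<lambda>h. Dfun j (restrict h {..<j}) (fst (h j)) (fst (snd (h j))) (snd (snd (h j)))) \<in> borel_measurable (HM k)"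
    if j: "j < k" for j
  proof -
    have pm: "(\<lambda>h. (restrict h {..<j}, h j)) \<in> measurable (HM k) (HM j \<Otimes>\<^sub>M (MX \<Otimes>\<^sub>M MA \<Otimes>\<^sub>M borel))"
      unfolding histM_def
      by (intro measurable_Pair measurable_restrict_subset measurable_component_singleton) (use j in auto)
    from measurable_compose[OF pm Dfun_meas] j k show ?thesis by simp
  qed
  then show ?thesis unfolding Zf_def by (intro borel_measurable_sum) auto
qed

lemma S_sq: "k \<le> n \<Longrightarrow> integrable M (\<lambda>\<omega>. (Sv k \<omega>)\<^sup>2) \<and>
   (\<integral>\<omega>. (Sv k \<omega>)\<^sup>2 \<partial>M) = (\<Sum>j<k. \<integral>\<omega>. (Dfun j (hist X A Y j \<omega>) (X j \<omega>) (A j \<omega>) (Y j \<omega>))\<^sup>2 \<partial>M)"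
proof (induction k)
  case 0
  then show ?case by (simp add: Sv_def)
next
  case (Suc k)
  then have k: "k < n" and kle: "k \<le> n" by auto
  note IH = Suc.IH[OF kle]
  interpret T: thm6_i M MX MA lamA Xi Gam pol X A Y g muhat F n L B k by (rule thm6_i_at[OF k])
  define D where "D = (\<lambda>\<omega>. Dfun k (hist X A Y k \<omega>) (X k \<omega>) (A k \<omega>) (Y k \<omega>))"
  have Sk: "Sv (Suc k) \<omega> = Sv k \<omega> + D \<omega>" for \<omega> by (simp add: Sv_def D_def)
  have Zm: "Zf k \<in> borel_measurable (HM k)" by (rule Zf_meas[OF kle])
  have Sm: "(\<lambda>\<omega>. Sv k \<omega>) \<in> borel_measurable M"
    unfolding Sv_Zf using measurable_compose[OF T.H_meas Zm] by simp
  have Z2: "integrable M (\<lambda>\<omega>. (Zf k (hist X A Y k \<omega>))\<^sup>2)" using IH by (simp add: Sv_Zf)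
  note O = T.D_orth[OF Zm Z2]
  have Dm: "D \<in> borel_measurable M" unfolding D_def Dfun_def by (rule T.D_meas)
  have D2: "integrable M (\<lambda>\<omega>. (D \<omega>)\<^sup>2)" unfolding D_def Dfun_def by (rule T.D2_int)
  have SD: "integrable M (\<lambda>\<omega>. Sv k \<omega> * D \<omega>)" using O(1) by (simp add: Sv_Zf D_def Dfun_def)
  have SD0: "(\<integral>\<omega>. Sv k \<omega> * D \<omega> \<partial>M) = 0" using O(2) by (simp add: Sv_Zf D_def Dfun_def)
  have S2: "integrable M (\<lambda>\<omega>. (Sv k \<omega>)\<^sup>2)" using IH by simp
  have "integrable M (\<lambda>\<omega>. (Sv k \<omega> + D \<omega>)\<^sup>2)" by (rule L2_add[OF Sm Dm S2 D2])
  moreover have "(\<integral>\<omega>. (Sv k \<omega> + D \<omega>)\<^sup>2 \<partial>M) = (\<integral>\<omega>. (Sv k \<omega>)\<^sup>2 + 2 * (Sv k \<omega> * D \<omega>) + (D \<omega>)\<^sup>2 \<partial>M)"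
    by (rule Bochner_Integration.integral_cong[OF refl]) (simp add: power2_sum)
  moreover have "\<dots> = (\<integral>\<omega>. (Sv k \<omega>)\<^sup>2 \<partial>M) + 2 * (\<integral>\<omega>. Sv k \<omega> * D \<omega> \<partial>M) + (\<integral>\<omega>. (D \<omega>)\<^sup>2 \<partial>M)"
    using S2 SD D2 by simp
  ultimately show ?case using IH SD0 by (simp add: Sk D_def)
qed

end

context thm6
begin

abbreviation "Vt \<equiv> (\<integral>x. (Is x - tau0)\<^sup>2 \<partial>Xi)"
abbreviation "Nj j \<equiv> (\<integral>\<omega>. (g (X j \<omega>) (A j \<omega>))\<^sup>2 * (sqrt (sigma_sq Gam (X j \<omega>) (A j \<omega>)))\<^sup>2
           / (pol j (X j \<omega>) (hist X A Y j \<omega>) (A j \<omega>))\<^sup>2 \<partial>M)"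
abbreviation "Tj j \<equiv> (\<integral>\<omega>. (ms (X j \<omega>) (A j \<omega>) - muhat j (hist X A Y j \<omega>) (X j \<omega>) (A j \<omega>))\<^sup>2 \<partial>M)"
abbreviation "Pj mu j \<equiv> (\<integral>\<omega>. (mu (X j \<omega>) (A j \<omega>) - ms (X j \<omega>) (A j \<omega>))\<^sup>2 \<partial>M)"
abbreviation "Sj j \<equiv> (\<integral>\<omega>. sigma_sq Gam (X j \<omega>) (A j \<omega>) \<partial>M)"

lemma per_j:
  assumes j: "j < n"
  shows "(\<integral>\<omega>. (Dfun j (hist X A Y j \<omega>) (X j \<omega>) (A j \<omega>) (Y j \<omega>))\<^sup>2 \<partial>M) \<le> Vt + Nj j + B\<^sup>2 * Tj j"
    and "(\<integral>\<omega>. (Y j \<omega> - muhat j (hist X A Y j \<omega>) (X j \<omega>) (A j \<omega>))\<^sup>2 \<partial>M) = Sj j + Tj j"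
    and "mu \<in> F \<Longrightarrow> (\<integral>\<omega>. (Y j \<omega> - mu (X j \<omega>) (A j \<omega>))\<^sup>2 \<partial>M) = Sj j + Pj mu j"
proof -
  interpret T: thm6_i M MX MA lamA Xi Gam pol X A Y g muhat F n L B j by (rule thm6_i_at[OF j])
  have Neq: "(\<integral>\<omega>. (g (X j \<omega>) (A j \<omega>) / pol j (X j \<omega>) (hist X A Y j \<omega>) (A j \<omega>))\<^sup>2 * sigma_sq Gam (X j \<omega>) (A j \<omega>) \<partial>M) = Nj j"
    by (rule Bochner_Integration.integral_cong[OF refl]) (simp add: power_divide sigma_nn)
  show "(\<integral>\<omega>. (Dfun j (hist X A Y j \<omega>) (X j \<omega>) (A j \<omega>) (Y j \<omega>))\<^sup>2 \<partial>M) \<le> Vt + Nj j + B\<^sup>2 * Tj j"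
    using T.D2_bound unfolding Dfun_def Neq .
  have nm: "(\<lambda>z. muhat j (fst z) (fst (snd z)) (snd (snd z))) \<in> borel_measurable (HM j \<Otimes>\<^sub>M MX \<Otimes>\<^sub>M MA)"
    by measurable
  have n2: "integrable M (\<lambda>\<omega>. ((\<lambda>z. muhat j (fst z) (fst (snd z)) (snd (snd z))) (hist X A Y j \<omega>, X j \<omega>, A j \<omega>))\<^sup>2)"
    using T.Mh2_int by simp
  show "(\<integral>\<omega>. (Y j \<omega> - muhat j (hist X A Y j \<omega>) (X j \<omega>) (A j \<omega>))\<^sup>2 \<partial>M) = Sj j + Tj j"
    using T.Ydecomp[OF nm n2] by simp
  assume mu: "mu \<in> F"
  note mu_comp[OF mu, measurable]
  have mm: "(\<lambda>z. mu (fst (snd z)) (snd (snd z))) \<in> borel_measurable (HM j \<Otimes>\<^sub>M MX \<Otimes>\<^sub>M MA)"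
    by measurable
  have m2: "integrable M (\<lambda>\<omega>. ((\<lambda>z. mu (fst (snd z)) (snd (snd z))) (hist X A Y j \<omega>, X j \<omega>, A j \<omega>))\<^sup>2)"
    by (simp, rule T.bounded_sq_int[where K=L]) (use mu_bound[OF mu] in \<open>auto\<close>)
  have "(\<integral>\<omega>. (ms (X j \<omega>) (A j \<omega>) - mu (X j \<omega>) (A j \<omega>))\<^sup>2 \<partial>M) = Pj mu j"
    by (rule Bochner_Integration.integral_cong[OF refl]) (simp add: power2_commute)
  then show "(\<integral>\<omega>. (Y j \<omega> - mu (X j \<omega>) (A j \<omega>))\<^sup>2 \<partial>M) = Sj j + Pj mu j"
    using T.Ydecomp[OF mm m2] by simp
qed

lemma aipw_eq: "aipw lamA g pol muhat X A Y n \<omega> - tau0 = (1 / real n) * Sv n \<omega>"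
proof -
  have "Sv n \<omega> = (\<Sum>i<n. g (X i \<omega>) (A i \<omega>) / pol i (X i \<omega>) (hist X A Y i \<omega>) (A i \<omega>)
       * (Y i \<omega> - muhat i (hist X A Y i \<omega>) (X i \<omega>) (A i \<omega>))
     + innerA lamA (g (X i \<omega>)) (muhat i (hist X A Y i \<omega>) (X i \<omega>))) - real n * tau0"
    unfolding Sv_def Dfun_def by (simp add: sum_subtractf)
  then show ?thesis unfolding aipw_def using n_pos by (simp add: field_simps)
qed

lemma main:
  "(\<integral>\<omega>. (aipw lamA g pol muhat X A Y n \<omega> - tau Xi lamA g Gam)\<^sup>2 \<partial>M)
     \<le> (1 / real n) * (v_star_sq M Xi lamA g Gam pol X A Y n
         + B\<^sup>2 * ((1 / real n) * (\<integral>\<omega>. regret F muhat X A Y n \<omega> \<partial>M)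
                 + (INF mu\<in>F. (1 / real n) * (\<Sum>i<n.
                      \<integral>\<omega>. (mu (X i \<omega>) (A i \<omega>) - mu_star Gam (X i \<omega>) (A i \<omega>))\<^sup>2 \<partial>M))))"
proof -
  define R where "R = (\<integral>\<omega>. regret F muhat X A Y n \<omega> \<partial>M)"
  define T where "T = (\<Sum>j<n. Tj j)"
  define Nn where "Nn = norm_n_sq M g pol X A Y n (\<lambda>x a. sqrt (sigma_sq Gam x a))"
  define INFv where "INFv = (INF mu\<in>F. (1 / real n) * (\<Sum>i<n. Pj mu i))"
  have npos: "0 < real n" using n_pos by simp
  have S: "(\<integral>\<omega>. (Sv n \<omega>)\<^sup>2 \<partial>M) = (\<Sum>j<n. \<integral>\<omega>. (Dfun j (hist X A Y j \<omega>) (X j \<omega>) (A j \<omega>) (Y j \<omega>))\<^sup>2 \<partial>M)"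
    using S_sq[of n] by simp
  have lhs: "(\<integral>\<omega>. (aipw lamA g pol muhat X A Y n \<omega> - tau0)\<^sup>2 \<partial>M) = (1 / real n)\<^sup>2 * (\<integral>\<omega>. (Sv n \<omega>)\<^sup>2 \<partial>M)"
    by (simp only: aipw_eq power_mult_distrib integral_mult_right_zero)
  have sumN: "(\<Sum>j<n. Nj j) = real n * Nn"
    unfolding Nn_def norm_n_sq_def using npos by simp
  have sum_le: "(\<Sum>j<n. \<integral>\<omega>. (Dfun j (hist X A Y j \<omega>) (X j \<omega>) (A j \<omega>) (Y j \<omega>))\<^sup>2 \<partial>M)
      \<le> (\<Sum>j<n. Vt + Nj j + B\<^sup>2 * Tj j)"
    by (intro sum_mono per_j(1)) simp
  also have "\<dots> = real n * Vt + real n * Nn + B\<^sup>2 * T"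
    by (simp add: sum.distrib sum_distrib_left T_def sumN)
  finally have sum_le': "(\<Sum>j<n. \<integral>\<omega>. (Dfun j (hist X A Y j \<omega>) (X j \<omega>) (A j \<omega>) (Y j \<omega>))\<^sup>2 \<partial>M)
      \<le> real n * Vt + real n * Nn + B\<^sup>2 * T" .
  have TR: "T \<le> R + (\<Sum>j<n. Pj mu j)" if mu: "mu \<in> F" for mu
  proof -
    have e1: "(\<Sum>j<n. \<integral>\<omega>. (Y j \<omega> - muhat j (hist X A Y j \<omega>) (X j \<omega>) (A j \<omega>))\<^sup>2 \<partial>M) = (\<Sum>j<n. Sj j + Tj j)"
      by (rule sum.cong) (auto intro: per_j(2))
    have e2: "(\<Sum>j<n. \<integral>\<omega>. (Y j \<omega> - mu (X j \<omega>) (A j \<omega>))\<^sup>2 \<partial>M) = (\<Sum>j<n. Sj j + Pj mu j)"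
      by (rule sum.cong) (auto intro: per_j(3)[OF _ mu])
    have "(\<Sum>j<n. Sj j + Tj j) \<le> R + (\<Sum>j<n. Sj j + Pj mu j)"
      using regret_bound[OF mu] unfolding R_def e1 e2 .
    then show ?thesis by (simp add: sum.distrib T_def)
  qed
  have TINF: "T / real n - R / real n \<le> INFv"
    unfolding INFv_def
  proof (rule cINF_greatest[OF F_ne])
    fix mu assume mu: "mu \<in> F"
    have "T - R \<le> (\<Sum>i<n. Pj mu i)" using TR[OF mu] by simp
    then have "(T - R) / real n \<le> (\<Sum>i<n. Pj mu i) / real n" using npos by (intro divide_right_mono) auto
    then show "T / real n - R / real n \<le> (1 / real n) * (\<Sum>i<n. Pj mu i)" by (simp add: diff_divide_distrib)
  qed
  have "(\<integral>\<omega>. (aipw lamA g pol muhat X A Y n \<omega> - tau0)\<^sup>2 \<partial>M)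
      \<le> (1 / real n)\<^sup>2 * (real n * Vt + real n * Nn + B\<^sup>2 * T)"
    unfolding lhs S by (intro mult_left_mono sum_le') simp
  also have "\<dots> = (1 / real n) * (Vt + Nn + B\<^sup>2 * (T / real n))"
    using npos by (simp add: field_simps power2_eq_square)
  also have "\<dots> \<le> (1 / real n) * (Vt + Nn + B\<^sup>2 * ((1 / real n) * R + INFv))"
  proof -
    have "T / real n \<le> (1 / real n) * R + INFv" using TINF by simp
    then have "B\<^sup>2 * (T / real n) \<le> B\<^sup>2 * ((1 / real n) * R + INFv)" by (intro mult_left_mono) auto
    then show ?thesis using npos by (intro mult_left_mono) auto
  qed
  finally show ?thesis unfolding R_def INFv_def Nn_def v_star_sq_def by simp
qed

end

theorem theorem6:
  fixes M :: "'w measure" and MX :: "'x measure" and MA :: "'a measure"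
    and lamA :: "'a measure" and Xi :: "'x measure"
    and Gam :: "'x \<Rightarrow> 'a \<Rightarrow> real measure"
    and pol :: "nat \<Rightarrow> 'x \<Rightarrow> ('x, 'a) hist \<Rightarrow> 'a \<Rightarrow> real"
    and X :: "nat \<Rightarrow> 'w \<Rightarrow> 'x" and A :: "nat \<Rightarrow> 'w \<Rightarrow> 'a" and Y :: "nat \<Rightarrow> 'w \<Rightarrow> real"
    and g :: "'x \<Rightarrow> 'a \<Rightarrow> real"
    and muhat :: "nat \<Rightarrow> ('x, 'a) hist \<Rightarrow> 'x \<Rightarrow> 'a \<Rightarrow> real"
    and F :: "('x \<Rightarrow> 'a \<Rightarrow> real) set"
    and n :: nat and L B :: real
  assumes model: "sequential_model M MX MA lamA Xi Gam pol X A Y n"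
    and n_pos: "0 < n"
    and Y_range: "\<forall>x a. AE y in Gam x a. \<bar>y\<bar> \<le> L"
    and g_meas: "(\<lambda>(x, a). g x a) \<in> borel_measurable (MX \<Otimes>\<^sub>M MA)"
    and B_pos: "0 < B"
    and overlap: "\<forall>i<n. AE \<omega> in M.
        \<bar>g (X i \<omega>) (A i \<omega>) / pol i (X i \<omega>) (hist X A Y i \<omega>) (A i \<omega>)\<bar> \<le> B"
    and coverage: "\<forall>i<n. \<forall>x hh a. g x a \<noteq> 0 \<longrightarrow> 0 < pol i x hh a"
    and F_meas: "\<forall>mu\<in>F. (\<lambda>(x, a). mu x a) \<in> borel_measurable (MX \<Otimes>\<^sub>M MA)
                          \<and> (\<forall>x a. \<bar>mu x a\<bar> \<le> L)"
    and F_ne: "F \<noteq> {}"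
    and muhat_meas: "\<forall>i<n. (\<lambda>(hh, x, a). muhat i hh x a)
                        \<in> borel_measurable (histM MX MA i \<Otimes>\<^sub>M MX \<Otimes>\<^sub>M MA)"
    and fin_inner_hat: "\<forall>i<n. \<forall>hh x. integrable lamA (\<lambda>a. g x a * muhat i hh x a)"
    and fin_inner_star: "\<forall>x. integrable lamA (\<lambda>a. g x a * mu_star Gam x a)"
    and fin_var: "integrable Xi (\<lambda>x. (innerA lamA (g x) (mu_star Gam x))\<^sup>2)"
    and fin_regret: "integrable M (regret F muhat X A Y n)"
    and fin_mse: "integrable M (\<lambda>\<omega>. (aipw lamA g pol muhat X A Y n \<omega> - tau Xi lamA g Gam)\<^sup>2)"
  shows "(\<integral>\<omega>. (aipw lamA g pol muhat X A Y n \<omega> - tau Xi lamA g Gam)\<^sup>2 \<partial>M)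
     \<le> (1 / real n) * (v_star_sq M Xi lamA g Gam pol X A Y n
         + B\<^sup>2 * ((1 / real n) * (\<integral>\<omega>. regret F muhat X A Y n \<omega> \<partial>M)
                 + (INF mu\<in>F. (1 / real n) * (\<Sum>i<n.
                      \<integral>\<omega>. (mu (X i \<omega>) (A i \<omega>) - mu_star Gam (X i \<omega>) (A i \<omega>))\<^sup>2 \<partial>M))))"
proof -
  interpret thm6 M MX MA lamA Xi Gam pol X A Y g muhat F n L B
    unfolding thm6_def using assms by blast
  show ?thesis by (rule main)
qed

end
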